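(* Let $T$ be an $L$-theory with $\ulcorner T\urcorner$ arithmetical. There is an arithmetical formula $\Phi_0(X)$ of second-order arithmetic (with one free set variable) such that for every $S\subseteq\mathbb N$, $\Phi_0(S)$ holds if and only if $S=\ulcorner T'\urcorner$ for some maximal consistent Henkin $L(C)$-theory $T'$ containing every universal $L$-sentence provable from $T$.
   Context: $C=\{c_1,c_2,\dots\}$ new constants, $L(C)$ computable. An arithmetical formula is a second-order formula with only number quantifiers. An $L(C)$-theory $T'$ is maximal consistent if it is consistent and (a) whenever $\sigma\mathbin{\dot-}2^{-n}\in T'$ for all $n$, then $\sigma\in T'$; (b) for any restricted sentences $\sigma,\tau$, either $\sigma\mathbin{\dot-}\tau\in T'$ or $\tau\mathbin{\dot-}\sigma\in T'$. $T'$ is Henkin if for every restricted formula $\varphi(x)$ and dyadic rationals $p<q$ there is a constant $c$ with $\min(\sup_x\varphi(x)\mathbin{\dot-}q,\ p\mathbin{\dot-}\varphi(c))\in T'$. $\ulcorner T'\urcorner$ is the set of Gödel numbers of its sentences. *)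

theory Defs
  imports Complex_Main "HOL-Library.Nat_Bijection"
begin

section \<open>Continuous first-order logic: syntax (Ben Yaacov--Pedersen style)\<close>

text \<open>Terms of L(C): variables, function symbols of L (coded by naturals), and the
  new constants C = {c_1, c_2, ...}; TCst n stands for c_(n+1).\<close>
datatype trm = TVar nat | TFn nat "trm list" | TCst nat

text \<open>Restricted formulas: atomic d(s,t) and P(ts); connectives neg, half, truncated
  minus; quantifier sup (inf is the abbreviation neg sup neg).\<close>
datatype fm =
    FDist trm trm
  | FPred nat "trm list"
  | FNeg fm
  | FHalf fm
  | FMinus fm fm
  | FSup nat fm

definition FInf :: "nat \<Rightarrow> fm \<Rightarrow> fm" where
  "FInf x \<phi> = FNeg (FSup x (FNeg \<phi>))"

definition FMin :: "fm \<Rightarrow> fm \<Rightarrow> fm" where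
  "FMin a b = FMinus a (FMinus a b)"

definition FZero :: fm where "FZero = FSup 0 (FDist (TVar 0) (TVar 0))"
definition FOne :: fm where "FOne = FNeg FZero"

text \<open>dyad m k is the sentence denoting k/2^m (for k \<le> 2^m);
  in particular dyad n 1 = half^n 1 denotes 2^-n.\<close>
fun dyad :: "nat \<Rightarrow> nat \<Rightarrow> fm" where
  "dyad 0 k = (if k = 0 then FZero else FOne)"
| "dyad (Suc m) k = (if k \<le> 2 ^ m then FHalf (dyad m k)
                     else FNeg (FHalf (dyad m (2 ^ Suc m - k))))"

definition canon_dyadic :: "nat \<Rightarrow> nat \<Rightarrow> bool" where
  "canon_dyadic k m \<longleftrightarrow> k \<le> 2 ^ m \<and> (m = 0 \<or> odd k)"

definition dval :: "nat \<Rightarrow> nat \<Rightarrow> real" where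
  "dval k m = real k / 2 ^ m"

record lang =
  fsyms :: "nat set"
  psyms :: "nat set"
  farity :: "nat \<Rightarrow> nat"
  parity :: "nat \<Rightarrow> nat"
  fmod :: "nat \<Rightarrow> nat \<Rightarrow> real \<Rightarrow> real"   \<comment> \<open>modulus of uniform continuity of f in argument i\<close>
  pmod :: "nat \<Rightarrow> nat \<Rightarrow> real \<Rightarrow> real"

definition is_lang :: "lang \<Rightarrow> bool" where
  "is_lang L \<longleftrightarrow>
     (\<forall>f i e. f \<in> fsyms L \<longrightarrow> i < farity L f \<longrightarrow> 0 < e \<longrightarrow> e \<le> 1 \<longrightarrow>
        0 < fmod L f i e \<and> fmod L f i e \<le> 1) \<and>
     (\<forall>P i e. P \<in> psyms L \<longrightarrow> i < parity L P \<longrightarrow> 0 < e \<longrightarrow> e \<le> 1 \<longrightarrow>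
        0 < pmod L P i e \<and> pmod L P i e \<le> 1)"

fun wf_trm :: "lang \<Rightarrow> bool \<Rightarrow> trm \<Rightarrow> bool" where
  "wf_trm L b (TVar x) = True"
| "wf_trm L b (TCst c) = b"
| "wf_trm L b (TFn f ts) = (f \<in> fsyms L \<and> length ts = farity L f \<and> (\<forall>t\<in>set ts. wf_trm L b t))"

text \<open>b = True: formulas of L(C); b = False: formulas of L.\<close>
fun wf_fm :: "lang \<Rightarrow> bool \<Rightarrow> fm \<Rightarrow> bool" where
  "wf_fm L b (FDist s t) = (wf_trm L b s \<and> wf_trm L b t)"
| "wf_fm L b (FPred P ts) = (P \<in> psyms L \<and> length ts = parity L P \<and> (\<forall>t\<in>set ts. wf_trm L b t))"
| "wf_fm L b (FNeg \<phi>) = wf_fm L b \<phi>"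
| "wf_fm L b (FHalf \<phi>) = wf_fm L b \<phi>"
| "wf_fm L b (FMinus \<phi> \<psi>) = (wf_fm L b \<phi> \<and> wf_fm L b \<psi>)"
| "wf_fm L b (FSup x \<phi>) = wf_fm L b \<phi>"

fun fv_trm :: "trm \<Rightarrow> nat set" where
  "fv_trm (TVar x) = {x}"
| "fv_trm (TCst c) = {}"
| "fv_trm (TFn f ts) = (\<Union>t\<in>set ts. fv_trm t)"

fun fv_fm :: "fm \<Rightarrow> nat set" where
  "fv_fm (FDist s t) = fv_trm s \<union> fv_trm t"
| "fv_fm (FPred P ts) = (\<Union>t\<in>set ts. fv_trm t)"
| "fv_fm (FNeg \<phi>) = fv_fm \<phi>"
| "fv_fm (FHalf \<phi>) = fv_fm \<phi>"
| "fv_fm (FMinus \<phi> \<psi>) = fv_fm \<phi> \<union> fv_fm \<psi>"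
| "fv_fm (FSup x \<phi>) = fv_fm \<phi> - {x}"

fun subst_trm :: "nat \<Rightarrow> trm \<Rightarrow> trm \<Rightarrow> trm" where
  "subst_trm x t (TVar y) = (if y = x then t else TVar y)"
| "subst_trm x t (TCst c) = TCst c"
| "subst_trm x t (TFn f ts) = TFn f (map (subst_trm x t) ts)"

fun subst_fm :: "nat \<Rightarrow> trm \<Rightarrow> fm \<Rightarrow> fm" where
  "subst_fm x t (FDist s u) = FDist (subst_trm x t s) (subst_trm x t u)"
| "subst_fm x t (FPred P ts) = FPred P (map (subst_trm x t) ts)"
| "subst_fm x t (FNeg \<phi>) = FNeg (subst_fm x t \<phi>)"
| "subst_fm x t (FHalf \<phi>) = FHalf (subst_fm x t \<phi>)"
| "subst_fm x t (FMinus \<phi> \<psi>) = FMinus (subst_fm x t \<phi>) (subst_fm x t \<psi>)"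
| "subst_fm x t (FSup y \<phi>) = (if y = x then FSup y \<phi> else FSup y (subst_fm x t \<phi>))"

fun free_for :: "nat \<Rightarrow> trm \<Rightarrow> fm \<Rightarrow> bool" where
  "free_for x t (FDist s u) = True"
| "free_for x t (FPred P ts) = True"
| "free_for x t (FNeg \<phi>) = free_for x t \<phi>"
| "free_for x t (FHalf \<phi>) = free_for x t \<phi>"
| "free_for x t (FMinus \<phi> \<psi>) = (free_for x t \<phi> \<and> free_for x t \<psi>)"
| "free_for x t (FSup y \<phi>) = (x \<notin> fv_fm (FSup y \<phi>) \<or> (y \<notin> fv_trm t \<and> free_for x t \<phi>))"

fun qfree :: "fm \<Rightarrow> bool" where
  "qfree (FSup x \<phi>) = False"
| "qfree (FNeg \<phi>) = qfree \<phi>"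
| "qfree (FHalf \<phi>) = qfree \<phi>"
| "qfree (FMinus \<phi> \<psi>) = (qfree \<phi> \<and> qfree \<psi>)"
| "qfree (FDist s t) = True"
| "qfree (FPred P ts) = True"

fun universal :: "fm \<Rightarrow> bool" where
  "universal (FSup x \<phi>) = universal \<phi>"
| "universal \<phi> = qfree \<phi>"

definition sentence :: "lang \<Rightarrow> bool \<Rightarrow> fm \<Rightarrow> bool" where
  "sentence L b \<sigma> \<longleftrightarrow> wf_fm L b \<sigma> \<and> fv_fm \<sigma> = {}"

definition is_theory :: "lang \<Rightarrow> bool \<Rightarrow> fm set \<Rightarrow> bool" where
  "is_theory L b T \<longleftrightarrow> (\<forall>\<sigma>\<in>T. sentence L b \<sigma>)"

section \<open>The Ben Yaacov--Pedersen proof system\<close>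

inductive deriv :: "lang \<Rightarrow> bool \<Rightarrow> fm set \<Rightarrow> fm \<Rightarrow> bool" for L b \<Gamma> where
  hyp: "\<phi> \<in> \<Gamma> \<Longrightarrow> wf_fm L b \<phi> \<Longrightarrow> deriv L b \<Gamma> \<phi>"
| A1: "wf_fm L b \<phi> \<Longrightarrow> wf_fm L b \<psi> \<Longrightarrow> deriv L b \<Gamma> (FMinus (FMinus \<phi> \<psi>) \<phi>)"
| A2: "wf_fm L b \<phi> \<Longrightarrow> wf_fm L b \<psi> \<Longrightarrow> wf_fm L b \<chi> \<Longrightarrow>
       deriv L b \<Gamma> (FMinus (FMinus (FMinus \<chi> \<phi>) (FMinus \<chi> \<psi>)) (FMinus \<psi> \<phi>))"
| A3: "wf_fm L b \<phi> \<Longrightarrow> wf_fm L b \<psi> \<Longrightarrow>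
       deriv L b \<Gamma> (FMinus (FMinus \<phi> (FMinus \<phi> \<psi>)) (FMinus \<psi> (FMinus \<psi> \<phi>)))"
| A4: "wf_fm L b \<phi> \<Longrightarrow> wf_fm L b \<psi> \<Longrightarrow>
       deriv L b \<Gamma> (FMinus (FMinus (FNeg \<phi>) (FNeg \<psi>)) (FMinus \<psi> \<phi>))"
| A5: "wf_fm L b \<phi> \<Longrightarrow> deriv L b \<Gamma> (FMinus (FHalf \<phi>) (FMinus \<phi> (FHalf \<phi>)))"
| A6: "wf_fm L b \<phi> \<Longrightarrow> deriv L b \<Gamma> (FMinus (FMinus \<phi> (FHalf \<phi>)) (FHalf \<phi>))"
| A7: "wf_fm L b \<phi> \<Longrightarrow> wf_fm L b \<psi> \<Longrightarrow>
       deriv L b \<Gamma> (FMinus (FMinus (FSup x \<psi>) (FSup x \<phi>)) (FSup x (FMinus \<psi> \<phi>)))"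
| A8: "wf_fm L b \<phi> \<Longrightarrow> wf_trm L b t \<Longrightarrow> free_for x t \<phi> \<Longrightarrow>
       deriv L b \<Gamma> (FMinus (subst_fm x t \<phi>) (FSup x \<phi>))"
| A9: "wf_fm L b \<phi> \<Longrightarrow> x \<notin> fv_fm \<phi> \<Longrightarrow> deriv L b \<Gamma> (FMinus (FSup x \<phi>) \<phi>)"
| A10: "deriv L b \<Gamma> (FDist (TVar x) (TVar x))"
| A11: "deriv L b \<Gamma> (FMinus (FDist (TVar x) (TVar y)) (FDist (TVar y) (TVar x)))"
| A12: "deriv L b \<Gamma> (FMinus (FMinus (FDist (TVar x) (TVar z)) (FDist (TVar x) (TVar y)))
                               (FDist (TVar y) (TVar z)))"
| A13: "f \<in> fsyms L \<Longrightarrow> length xs = farity L f \<Longrightarrow> i < length xs \<Longrightarrow>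
        canon_dyadic kr mr \<Longrightarrow> canon_dyadic ke me \<Longrightarrow> 0 < kr \<Longrightarrow> 0 < ke \<Longrightarrow>
        dval kr mr < fmod L f i (dval ke me) \<Longrightarrow>
        deriv L b \<Gamma> (FMin (FMinus (FDist (TFn f (map TVar (xs[i := z]))) (TFn f (map TVar (xs[i := w]))))
                                  (dyad me ke))
                          (FMinus (dyad mr kr) (FDist (TVar z) (TVar w))))"
| A14: "P \<in> psyms L \<Longrightarrow> length xs = parity L P \<Longrightarrow> i < length xs \<Longrightarrow>
        canon_dyadic kr mr \<Longrightarrow> canon_dyadic ke me \<Longrightarrow> 0 < kr \<Longrightarrow> 0 < ke \<Longrightarrow>
        dval kr mr < pmod L P i (dval ke me) \<Longrightarrow>
        deriv L b \<Gamma> (FMin (FMinus (FMinus (FPred P (map TVar (xs[i := z]))) (FPred P (map TVar (xs[i := w]))))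
                                  (dyad me ke))
                          (FMinus (dyad mr kr) (FDist (TVar z) (TVar w))))"
| MP: "deriv L b \<Gamma> \<phi> \<Longrightarrow> deriv L b \<Gamma> (FMinus \<psi> \<phi>) \<Longrightarrow> deriv L b \<Gamma> \<psi>"
| Gen: "deriv L b \<Gamma> \<phi> \<Longrightarrow> deriv L b \<Gamma> (FSup x \<phi>)"

definition consistent :: "lang \<Rightarrow> bool \<Rightarrow> fm set \<Rightarrow> bool" where
  "consistent L b \<Gamma> \<longleftrightarrow> (\<exists>\<phi>. wf_fm L b \<phi> \<and> \<not> deriv L b \<Gamma> \<phi>)"

definition max_consistent :: "lang \<Rightarrow> fm set \<Rightarrow> bool" where
  "max_consistent L T' \<longleftrightarrow> consistent L True T' \<and>
     (\<forall>\<sigma>. sentence L True \<sigma> \<longrightarrow> (\<forall>n. FMinus \<sigma> (dyad n 1) \<in> T') \<longrightarrow> \<sigma> \<in> T') \<and>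
     (\<forall>\<sigma> \<tau>. sentence L True \<sigma> \<longrightarrow> sentence L True \<tau> \<longrightarrow>
        FMinus \<sigma> \<tau> \<in> T' \<or> FMinus \<tau> \<sigma> \<in> T')"

definition henkin :: "lang \<Rightarrow> fm set \<Rightarrow> bool" where
  "henkin L T' \<longleftrightarrow>
     (\<forall>\<phi> x kp mp kq mq. wf_fm L True \<phi> \<longrightarrow> fv_fm \<phi> \<subseteq> {x} \<longrightarrow>
        canon_dyadic kp mp \<longrightarrow> canon_dyadic kq mq \<longrightarrow> dval kp mp < dval kq mq \<longrightarrow>
        (\<exists>c. FMin (FMinus (FSup x \<phi>) (dyad mq kq)) (FMinus (dyad mp kp) (subst_fm x (TCst c) \<phi>)) \<in> T'))"

primrec enc_trm :: "trm \<Rightarrow> nat" where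
  "enc_trm (TVar x) = prod_encode (0, x)"
| "enc_trm (TFn f ts) = prod_encode (1, prod_encode (f, list_encode (map enc_trm ts)))"
| "enc_trm (TCst c) = prod_encode (2, c)"

primrec enc_fm :: "fm \<Rightarrow> nat" where
  "enc_fm (FDist s t) = prod_encode (0, prod_encode (enc_trm s, enc_trm t))"
| "enc_fm (FPred P ts) = prod_encode (1, prod_encode (P, list_encode (map enc_trm ts)))"
| "enc_fm (FNeg \<phi>) = prod_encode (2, enc_fm \<phi>)"
| "enc_fm (FHalf \<phi>) = prod_encode (3, enc_fm \<phi>)"
| "enc_fm (FMinus \<phi> \<psi>) = prod_encode (4, prod_encode (enc_fm \<phi>, enc_fm \<psi>))"
| "enc_fm (FSup x \<phi>) = prod_encode (5, prod_encode (x, enc_fm \<phi>))"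

section \<open>Arithmetical formulas of second-order arithmetic (one set variable X, number quantifiers only)\<close>

datatype aterm = AV nat | AZ | AS aterm | AAdd aterm aterm | AMul aterm aterm

datatype aform = AEq aterm aterm | ALt aterm aterm | AIn aterm
  | ANot aform | AAnd aform aform | AEx nat aform

primrec aeval :: "(nat \<Rightarrow> nat) \<Rightarrow> aterm \<Rightarrow> nat" where
  "aeval e (AV x) = e x"
| "aeval e AZ = 0"
| "aeval e (AS t) = Suc (aeval e t)"
| "aeval e (AAdd s t) = aeval e s + aeval e t"
| "aeval e (AMul s t) = aeval e s * aeval e t"

primrec aholds :: "nat set \<Rightarrow> (nat \<Rightarrow> nat) \<Rightarrow> aform \<Rightarrow> bool" where
  "aholds S e (AEq s t) = (aeval e s = aeval e t)"
| "aholds S e (ALt s t) = (aeval e s < aeval e t)"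
| "aholds S e (AIn t) = (aeval e t \<in> S)"
| "aholds S e (ANot \<phi>) = (\<not> aholds S e \<phi>)"
| "aholds S e (AAnd \<phi> \<psi>) = (aholds S e \<phi> \<and> aholds S e \<psi>)"
| "aholds S e (AEx x \<phi>) = (\<exists>n. aholds S (e(x := n)) \<phi>)"

primrec atfv :: "aterm \<Rightarrow> nat set" where
  "atfv (AV x) = {x}"
| "atfv AZ = {}"
| "atfv (AS t) = atfv t"
| "atfv (AAdd s t) = atfv s \<union> atfv t"
| "atfv (AMul s t) = atfv s \<union> atfv t"

primrec afv :: "aform \<Rightarrow> nat set" where
  "afv (AEq s t) = atfv s \<union> atfv t"
| "afv (ALt s t) = atfv s \<union> atfv t"
| "afv (AIn t) = atfv t"
| "afv (ANot \<phi>) = afv \<phi>"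
| "afv (AAnd \<phi> \<psi>) = afv \<phi> \<union> afv \<psi>"
| "afv (AEx x \<phi>) = afv \<phi> - {x}"

primrec first_order :: "aform \<Rightarrow> bool" where
  "first_order (AEq s t) = True"
| "first_order (ALt s t) = True"
| "first_order (AIn t) = False"
| "first_order (ANot \<phi>) = first_order \<phi>"
| "first_order (AAnd \<phi> \<psi>) = (first_order \<phi> \<and> first_order \<psi>)"
| "first_order (AEx x \<phi>) = first_order \<phi>"

definition arithmetical_set :: "nat set \<Rightarrow> bool" where
  "arithmetical_set A \<longleftrightarrow>
     (\<exists>\<phi>. first_order \<phi> \<and> afv \<phi> \<subseteq> {0} \<and> (\<forall>n. n \<in> A \<longleftrightarrow> aholds {} (\<lambda>_. n) \<phi>))"

inductive delta0 :: "aform \<Rightarrow> bool" where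
  "delta0 (AEq s t)"
| "delta0 (ALt s t)"
| "delta0 \<phi> \<Longrightarrow> delta0 (ANot \<phi>)"
| "delta0 \<phi> \<Longrightarrow> delta0 \<psi> \<Longrightarrow> delta0 (AAnd \<phi> \<psi>)"
| "x \<notin> atfv t \<Longrightarrow> delta0 \<phi> \<Longrightarrow> delta0 (AEx x (AAnd (ALt (AV x) t) \<phi>))"

inductive sigma1 :: "aform \<Rightarrow> bool" where
  "delta0 \<phi> \<Longrightarrow> sigma1 \<phi>"
| "sigma1 \<phi> \<Longrightarrow> sigma1 (AEx x \<phi>)"

text \<open>Computably enumerable = Sigma^0_1-definable; computable = c.e. with c.e. complement.\<close>
definition ce_set :: "nat set \<Rightarrow> bool" where
  "ce_set A \<longleftrightarrow> (\<exists>\<phi>. sigma1 \<phi> \<and> afv \<phi> \<subseteq> {0} \<and> (\<forall>n. n \<in> A \<longleftrightarrow> aholds {} (\<lambda>_. n) \<phi>))"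

definition computable_set :: "nat set \<Rightarrow> bool" where
  "computable_set A \<longleftrightarrow> ce_set A \<and> ce_set (- A)"

definition computable_lang :: "lang \<Rightarrow> bool" where
  "computable_lang L \<longleftrightarrow>
     computable_set (fsyms L) \<and> computable_set (psyms L) \<and>
     computable_set {prod_encode (f, farity L f) | f. f \<in> fsyms L} \<and>
     computable_set {prod_encode (P, parity L P) | P. P \<in> psyms L} \<and>
     ce_set {prod_encode (f, prod_encode (i, prod_encode (prod_encode (k, m), prod_encode (k', m'))))
             | f i k m k' m'. f \<in> fsyms L \<and> i < farity L f \<and> 0 < k' \<and> k' \<le> 2 ^ m' \<and>
                 dval k m < fmod L f i (dval k' m')} \<and>
     ce_set {prod_encode (P, prod_encode (i, prod_encode (prod_encode (k, m), prod_encode (k', m'))))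
             | P i k m k' m'. P \<in> psyms L \<and> i < parity L P \<and> 0 < k' \<and> k' \<le> 2 ^ m' \<and>
                 dval k m < pmod L P i (dval k' m')}"

end

theory Submission
  imports Defs
begin

named_theorems dfn_intros

datatype tm = V nat | Z | Sc tm | Ad tm tm | Mu tm tm
datatype fo = Eq tm tm | Ls tm tm | Mem tm | Ng fo | Cj fo fo | Ex fo

definition econs :: "nat \<Rightarrow> (nat \<Rightarrow> nat) \<Rightarrow> nat \<Rightarrow> nat" where
  "econs n e = (\<lambda>i. case i of 0 \<Rightarrow> n | Suc j \<Rightarrow> e j)"

lemma econs_simps[simp]: "econs n e 0 = n" "econs n e (Suc j) = e j"
  by (simp_all add: econs_def)

primrec evT :: "(nat \<Rightarrow> nat) \<Rightarrow> tm \<Rightarrow> nat" where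
  "evT e (V i) = e i"
| "evT e Z = 0"
| "evT e (Sc t) = Suc (evT e t)"
| "evT e (Ad s t) = evT e s + evT e t"
| "evT e (Mu s t) = evT e s * evT e t"

primrec hold :: "nat set \<Rightarrow> (nat \<Rightarrow> nat) \<Rightarrow> fo \<Rightarrow> bool" where
  "hold S e (Eq s t) = (evT e s = evT e t)"
| "hold S e (Ls s t) = (evT e s < evT e t)"
| "hold S e (Mem t) = (evT e t \<in> S)"
| "hold S e (Ng \<phi>) = (\<not> hold S e \<phi>)"
| "hold S e (Cj \<phi> \<psi>) = (hold S e \<phi> \<and> hold S e \<psi>)"
| "hold S e (Ex \<phi>) = (\<exists>n. hold S (econs n e) \<phi>)"

primrec renT :: "(nat \<Rightarrow> nat) \<Rightarrow> tm \<Rightarrow> tm" where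
  "renT f (V i) = V (f i)"
| "renT f Z = Z"
| "renT f (Sc t) = Sc (renT f t)"
| "renT f (Ad s t) = Ad (renT f s) (renT f t)"
| "renT f (Mu s t) = Mu (renT f s) (renT f t)"

definition liftr :: "(nat \<Rightarrow> nat) \<Rightarrow> nat \<Rightarrow> nat" where
  "liftr f = (\<lambda>i. case i of 0 \<Rightarrow> 0 | Suc j \<Rightarrow> Suc (f j))"

primrec ren :: "(nat \<Rightarrow> nat) \<Rightarrow> fo \<Rightarrow> fo" where
  "ren f (Eq s t) = Eq (renT f s) (renT f t)"
| "ren f (Ls s t) = Ls (renT f s) (renT f t)"
| "ren f (Mem t) = Mem (renT f t)"
| "ren f (Ng \<phi>) = Ng (ren f \<phi>)"
| "ren f (Cj \<phi> \<psi>) = Cj (ren f \<phi>) (ren f \<psi>)"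
| "ren f (Ex \<phi>) = Ex (ren (liftr f) \<phi>)"

lemma evT_ren: "evT e (renT f t) = evT (\<lambda>i. e (f i)) t"
  by (induct t) auto

lemma econs_liftr: "(\<lambda>i. econs n e (liftr f i)) = econs n (\<lambda>i. e (f i))"
  by (rule ext) (simp add: liftr_def econs_def split: nat.split)

lemma hold_ren: "hold S e (ren f \<phi>) = hold S (\<lambda>i. e (f i)) \<phi>"
proof (induct \<phi> arbitrary: e f)
  case (Ex \<phi>)
  then show ?case by (simp add: econs_liftr)
qed (auto simp: evT_ren)

definition dfn :: "(nat set \<Rightarrow> (nat \<Rightarrow> nat) \<Rightarrow> bool) \<Rightarrow> bool" where
  "dfn P \<longleftrightarrow> (\<exists>\<phi>. \<forall>S e. hold S e \<phi> = P S e)"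

lemma dfn_cong: "dfn P \<Longrightarrow> (\<And>S e. P S e = Q S e) \<Longrightarrow> dfn Q"
  unfolding dfn_def by auto

lemma dfn_ren: "dfn P \<Longrightarrow> dfn (\<lambda>S e. P S (\<lambda>i. e (f i)))"
  unfolding dfn_def
  by (metis hold_ren)

lemma dfn_not[dfn_intros]: "dfn P \<Longrightarrow> dfn (\<lambda>S e. \<not> P S e)"
  unfolding dfn_def by (metis hold.simps(4))

lemma dfn_and[dfn_intros]: "dfn P \<Longrightarrow> dfn Q \<Longrightarrow> dfn (\<lambda>S e. P S e \<and> Q S e)"
  unfolding dfn_def by (metis hold.simps(5))

lemma dfn_or[dfn_intros]: "dfn P \<Longrightarrow> dfn Q \<Longrightarrow> dfn (\<lambda>S e. P S e \<or> Q S e)"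
proof -
  assume "dfn P" "dfn Q"
  then have "dfn (\<lambda>S e. \<not> (\<not> P S e \<and> \<not> Q S e))" by (intro dfn_not dfn_and)
  then show ?thesis by (rule dfn_cong) simp
qed

lemma dfn_imp[dfn_intros]: "dfn P \<Longrightarrow> dfn Q \<Longrightarrow> dfn (\<lambda>S e. P S e \<longrightarrow> Q S e)"
proof -
  assume "dfn P" "dfn Q"
  then have "dfn (\<lambda>S e. \<not> (P S e \<and> \<not> Q S e))" by (intro dfn_not dfn_and)
  then show ?thesis by (rule dfn_cong) simp
qed

lemma dfn_iff[dfn_intros]: "dfn P \<Longrightarrow> dfn Q \<Longrightarrow> dfn (\<lambda>S e. P S e \<longleftrightarrow> Q S e)"
proof -
  assume "dfn P" "dfn Q"
  then have "dfn (\<lambda>S e. (P S e \<longrightarrow> Q S e) \<and> (Q S e \<longrightarrow> P S e))" by (intro dfn_imp dfn_and)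
  then show ?thesis by (rule dfn_cong) blast
qed

lemma dfn_ex[dfn_intros]: "dfn (\<lambda>S e. P S (e 0) (\<lambda>i. e (Suc i))) \<Longrightarrow> dfn (\<lambda>S e. \<exists>n. P S n e)"
  unfolding dfn_def
proof (elim exE)
  fix \<phi> assume h: "\<forall>S e. hold S e \<phi> = P S (e 0) (\<lambda>i. e (Suc i))"
  have "\<forall>S e. hold S e (Ex \<phi>) = (\<exists>n. P S n e)"
    by (simp add: h)
  then show "\<exists>\<phi>. \<forall>S e. hold S e \<phi> = (\<exists>n. P S n e)" by blast
qed

lemma dfn_all[dfn_intros]: "dfn (\<lambda>S e. P S (e 0) (\<lambda>i. e (Suc i))) \<Longrightarrow> dfn (\<lambda>S e. \<forall>n. P S n e)"
proof -
  assume "dfn (\<lambda>S e. P S (e 0) (\<lambda>i. e (Suc i)))"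
  then have "dfn (\<lambda>S e. \<not> (\<exists>n. \<not> P S n e))" by (intro dfn_not dfn_ex)
  then show ?thesis by (rule dfn_cong) simp
qed

lemma dfn_const[dfn_intros]: "dfn (\<lambda>S e. c)"
proof (cases c)
  case True
  have "\<forall>S e. hold S e (Eq Z Z) = c" using True by simp
  then show ?thesis unfolding dfn_def by blast
next
  case False
  have "\<forall>S e. hold S e (Ls Z Z) = c" using False by simp
  then show ?thesis unfolding dfn_def by blast
qed

lemma atom_eq: "dfn (\<lambda>S e. e i = e j)"
  unfolding dfn_def by (rule exI[of _ "Eq (V i) (V j)"]) simp
lemma atom_zero: "dfn (\<lambda>S e. e i = 0)"
  unfolding dfn_def by (rule exI[of _ "Eq (V i) Z"]) simp
lemma atom_suc: "dfn (\<lambda>S e. e i = Suc (e j))"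
  unfolding dfn_def by (rule exI[of _ "Eq (V i) (Sc (V j))"]) simp
lemma atom_add: "dfn (\<lambda>S e. e i = e j + e k)"
  unfolding dfn_def by (rule exI[of _ "Eq (V i) (Ad (V j) (V k))"]) simp
lemma atom_mul: "dfn (\<lambda>S e. e i = e j * e k)"
  unfolding dfn_def by (rule exI[of _ "Eq (V i) (Mu (V j) (V k))"]) simp
lemma atom_less: "dfn (\<lambda>S e. e i < e j)"
  unfolding dfn_def by (rule exI[of _ "Ls (V i) (V j)"]) simp
lemma atom_in: "dfn (\<lambda>S e. e i \<in> S)"
  unfolding dfn_def by (rule exI[of _ "Mem (V i)"]) simp

definition dfnT :: "((nat \<Rightarrow> nat) \<Rightarrow> nat) \<Rightarrow> bool" where
  "dfnT t \<longleftrightarrow> dfn (\<lambda>S e. e 0 = t (\<lambda>i. e (Suc i)))"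

lemma dfnT_graph: "dfn (\<lambda>S e. e 0 = t (\<lambda>i. e (Suc i))) \<Longrightarrow> dfnT t"
  by (simp add: dfnT_def)

lemma dfnT_ren: "dfnT t \<Longrightarrow> dfnT (\<lambda>e. t (\<lambda>i. e (f i)))"
  unfolding dfnT_def
  by (drule dfn_ren[where f = "\<lambda>i. case i of 0 \<Rightarrow> 0 | Suc j \<Rightarrow> Suc (f j)"]) simp

lemma dfn_let: "dfnT a \<Longrightarrow> dfn (\<lambda>S e. Q S (e 0) (\<lambda>i. e (Suc i))) \<Longrightarrow> dfn (\<lambda>S e. Q S (a e) e)"
proof -
  assume a: "dfnT a" and q: "dfn (\<lambda>S e. Q S (e 0) (\<lambda>i. e (Suc i)))"
  have "dfn (\<lambda>S e. \<exists>n. n = a e \<and> Q S n e)"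
    by (rule dfn_ex, rule dfn_and) (use a q in \<open>simp_all add: dfnT_def\<close>)
  then show ?thesis by (rule dfn_cong) simp
qed

lemma dfnT_var[dfn_intros]: "dfnT (\<lambda>e. e i)"
  unfolding dfnT_def using atom_eq[of 0 "Suc i"] by simp

lemma dfnT_Suc[dfn_intros]: "dfnT a \<Longrightarrow> dfnT (\<lambda>e. Suc (a e))"
  apply (rule dfnT_graph)
  apply (rule dfn_let[where a = "\<lambda>e. a (\<lambda>i. e (Suc i))" and Q = "\<lambda>S x e. e 0 = Suc x",
        simplified])
   apply (rule dfnT_ren, assumption)
  using atom_suc[of "Suc 0" 0] by (simp add: dfnT_def)

lemma dfnT_const[dfn_intros]: "dfnT (\<lambda>e. c)"
proof (induct c)
  case 0
  then show ?case unfolding dfnT_def using atom_zero[of 0] by simp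
next
  case (Suc c)
  then show ?case using dfnT_Suc[of "\<lambda>e. c"] by simp
qed

lemma dfnT_add[dfn_intros]: "dfnT a \<Longrightarrow> dfnT b \<Longrightarrow> dfnT (\<lambda>e. a e + b e)"
  apply (rule dfnT_graph)
  apply (rule dfn_let[where a = "\<lambda>e. a (\<lambda>i. e (Suc i))" and Q = "\<lambda>S x e. e 0 = x + b (\<lambda>i. e (Suc i))",
        simplified])
   apply (rule dfnT_ren, assumption)
  apply (rule dfn_let[where a = "\<lambda>e. b (\<lambda>i. e (Suc (Suc i)))" and Q = "\<lambda>S x e. e 1 = e 0 + x",
        simplified])
   apply (rule dfnT_ren, assumption)
  using atom_add[of "Suc (Suc 0)" "Suc 0" 0] by (simp add: dfnT_def)

lemma dfnT_mul[dfn_intros]: "dfnT a \<Longrightarrow> dfnT b \<Longrightarrow> dfnT (\<lambda>e. a e * b e)"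
  apply (rule dfnT_graph)
  apply (rule dfn_let[where a = "\<lambda>e. a (\<lambda>i. e (Suc i))" and Q = "\<lambda>S x e. e 0 = x * b (\<lambda>i. e (Suc i))",
        simplified])
   apply (rule dfnT_ren, assumption)
  apply (rule dfn_let[where a = "\<lambda>e. b (\<lambda>i. e (Suc (Suc i)))" and Q = "\<lambda>S x e. e 1 = e 0 * x",
        simplified])
   apply (rule dfnT_ren, assumption)
  using atom_mul[of "Suc (Suc 0)" "Suc 0" 0] by (simp add: dfnT_def)

lemma dfn_eqT[dfn_intros]: "dfnT a \<Longrightarrow> dfnT b \<Longrightarrow> dfn (\<lambda>S e. a e = b e)"
  apply (rule dfn_let[where a = a and Q = "\<lambda>S x e. x = b e", simplified], assumption)
  by (simp add: dfnT_def)

lemma dfn_lessT[dfn_intros]: "dfnT a \<Longrightarrow> dfnT b \<Longrightarrow> dfn (\<lambda>S e. a e < b e)"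
  apply (rule dfn_let[where a = a and Q = "\<lambda>S x e. x < b e", simplified], assumption)
  apply (rule dfn_let[where a = "\<lambda>e. b (\<lambda>i. e (Suc i))" and Q = "\<lambda>S x e. e 0 < x", simplified])
   apply (rule dfnT_ren, assumption)
  using atom_less[of "Suc 0" 0] by simp

lemma dfn_leT[dfn_intros]: "dfnT a \<Longrightarrow> dfnT b \<Longrightarrow> dfn (\<lambda>S e. a e \<le> b e)"
proof -
  assume "dfnT a" "dfnT b"
  then have "dfn (\<lambda>S e. a e < Suc (b e))" by (intro dfn_lessT dfnT_Suc)
  then show ?thesis by (rule dfn_cong) (simp add: less_Suc_eq_le)
qed

lemma dfn_inT[dfn_intros]: "dfnT a \<Longrightarrow> dfn (\<lambda>S e. a e \<in> S)"
  apply (rule dfn_let[where a = a and Q = "\<lambda>S x e. x \<in> S", simplified], assumption)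
  using atom_in[of 0] by simp

lemma dfn_app1: "dfn (\<lambda>S e. R S (e 0)) \<Longrightarrow> dfnT a \<Longrightarrow> dfn (\<lambda>S e. R S (a e))"
  by (rule dfn_let[where a = a and Q = "\<lambda>S x e. R S x", simplified])


lemma dfnT_pe[dfn_intros]: "dfnT a \<Longrightarrow> dfnT b \<Longrightarrow> dfnT (\<lambda>e. prod_encode (a e, b e))"
  apply (rule dfnT_graph)
  apply (rule dfn_let[where a = "\<lambda>e. a (\<lambda>i. e (Suc i))" and Q = "\<lambda>S x e. e 0 = prod_encode (x, b (\<lambda>i. e (Suc i)))",
        simplified])
   apply (rule dfnT_ren, assumption)
  apply (rule dfn_let[where a = "\<lambda>e. b (\<lambda>i. e (Suc (Suc i)))" and Q = "\<lambda>S x e. e 1 = prod_encode (e 0, x)",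
        simplified])
   apply (rule dfnT_ren, assumption)
proof -
  have "dfn (\<lambda>S e. 2 * e (Suc (Suc 0)) = (e (Suc 0) + e 0) * Suc (e (Suc 0) + e 0) + 2 * e (Suc 0))" by (intro dfn_intros)
  moreover have "\<And>x y z::nat. (2 * z = (x + y) * Suc (x + y) + 2 * x) = (z = prod_encode (x, y))"
  proof -
    fix x y z :: nat
    have "2 * triangle (x + y) = (x + y) * Suc (x + y)" by (simp add: triangle_def)
    then show "(2 * z = (x + y) * Suc (x + y) + 2 * x) = (z = prod_encode (x, y))"
      by (simp add: prod_encode_def) arith
  qed
  ultimately show "dfn (\<lambda>S e. e (Suc (Suc 0)) = prod_encode (e (Suc 0), e 0))" by (rule dfn_cong)
qed

lemma dfnT_minus[dfn_intros]: "dfnT a \<Longrightarrow> dfnT b \<Longrightarrow> dfnT (\<lambda>e. a e - b e)"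
  apply (rule dfnT_graph)
  apply (rule dfn_let[where a = "\<lambda>e. a (\<lambda>i. e (Suc i))" and Q = "\<lambda>S x e. e 0 = x - b (\<lambda>i. e (Suc i))",
        simplified])
   apply (rule dfnT_ren, assumption)
  apply (rule dfn_let[where a = "\<lambda>e. b (\<lambda>i. e (Suc (Suc i)))" and Q = "\<lambda>S x e. e 1 = e 0 - x",
        simplified])
   apply (rule dfnT_ren, assumption)
proof -
  have "dfn (\<lambda>S e. (e (Suc 0) \<le> e 0 \<and> e (Suc (Suc 0)) = 0) \<or> e (Suc 0) = e 0 + e (Suc (Suc 0)))" by (intro dfn_intros)
  then show "dfn (\<lambda>S e. e (Suc (Suc 0)) = e (Suc 0) - e 0)" by (rule dfn_cong) arith
qed

lemma dfn_dvdT[dfn_intros]: "dfnT a \<Longrightarrow> dfnT b \<Longrightarrow> dfn (\<lambda>S e. a e dvd b e)"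
proof -
  assume a: "dfnT a" and b: "dfnT b"
  have "dfn (\<lambda>S e. \<exists>k. b e = a e * k)"
    apply (rule dfn_ex)
    apply (rule dfn_eqT)
     apply (rule dfnT_ren[OF b])
    apply (rule dfnT_mul[OF dfnT_ren[OF a]])
    by (rule dfnT_var)
  then show ?thesis by (rule dfn_cong) (auto simp: dvd_def)
qed


section \<open>Finite set coding\<close>

definition memb :: "nat \<Rightarrow> nat \<Rightarrow> nat \<Rightarrow> nat \<Rightarrow> bool" where
  "memb c d M p \<longleftrightarrow> p < M \<and> (1 + (p + 1) * d) dvd c"

lemma memb_dfn[dfn_intros]:
  "dfnT c \<Longrightarrow> dfnT d \<Longrightarrow> dfnT M \<Longrightarrow> dfnT p \<Longrightarrow> dfn (\<lambda>S e. memb (c e) (d e) (M e) (p e))"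
  unfolding memb_def by (intro dfn_intros)

lemma coprime_aux0:
  fixes d M a p :: nat
  assumes dv: "\<And>k. 0 < k \<Longrightarrow> k \<le> M \<Longrightarrow> k dvd d" and "a < M" "p < a"
  shows "coprime (1 + (a + 1) * d) (1 + (p + 1) * d)"
proof -
  let ?u = "1 + (a + 1) * d" and ?v = "1 + (p + 1) * d"
  define g where "g = gcd ?u ?v"
  have gu: "g dvd ?u" and gv: "g dvd ?v" by (simp_all add: g_def)
  have eq2: "(a + 1) * ?v - (p + 1) * ?u = a - p"
    by (simp add: algebra_simps)
  have "g dvd (a + 1) * ?v - (p + 1) * ?u"
    by (rule dvd_diff_nat; rule dvd_mult; fact)
  then have "g dvd a - p" using eq2 by simp
  moreover have "a - p > 0" using assms by simp
  ultimately have "g \<le> a - p" by (simp add: dvd_imp_le)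
  moreover have "g > 0" by (simp add: g_def)
  ultimately have "g dvd d" using dv assms by simp
  then have "g dvd (a + 1) * d" by simp
  with gu have "g dvd 1"
    by (metis dvd_add_left_iff add.commute)
  then show ?thesis unfolding g_def by (simp add: coprime_iff_gcd_eq_1)
qed

lemma coprime_aux:
  fixes d M a p :: nat
  assumes dv: "\<And>k. 0 < k \<Longrightarrow> k \<le> M \<Longrightarrow> k dvd d" and "a < M" "p < M" "a \<noteq> p"
  shows "coprime (1 + (p + 1) * d) (1 + (a + 1) * d)"
proof (cases "p < a")
  case True
  then show ?thesis using coprime_aux0[OF dv assms(2) True] by (simp add: coprime_commute)
next
  case False
  then have "a < p" using assms by simp
  then show ?thesis using coprime_aux0[OF dv assms(3) \<open>a < p\<close>] by simp
qed

lemma code_exists: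
  assumes "finite A"
  shows "\<exists>c d M. \<forall>p. memb c d M p \<longleftrightarrow> p \<in> A"
proof -
  define M where "M = Suc (Max (insert 0 A))"
  define d :: nat where "d = fact M"
  define c where "c = (\<Prod>a\<in>A. 1 + (a + 1) * d)"
  have AM: "a < M" if "a \<in> A" for a
    using assms that unfolding M_def by (simp add: le_imp_less_Suc)
  have dv: "\<And>k. 0 < k \<Longrightarrow> k \<le> M \<Longrightarrow> k dvd d" unfolding d_def by (simp add: dvd_fact)
  have dpos: "d > 0" unfolding d_def by simp
  have "memb c d M p \<longleftrightarrow> p \<in> A" for p
  proof
    assume "p \<in> A"
    then show "memb c d M p" unfolding memb_def c_def using AM assms
      by (auto intro: dvd_prodI)
  next
    assume m: "memb c d M p"
    show "p \<in> A"
    proof (rule ccontr)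
      assume np: "p \<notin> A"
      have "coprime (1 + (p + 1) * d) c" unfolding c_def
        by (rule prod_coprime_right, rule coprime_aux[OF dv]) (use m np AM in \<open>auto simp: memb_def\<close>)
      moreover have "(1 + (p + 1) * d) dvd c" using m by (simp add: memb_def)
      ultimately have "is_unit (1 + (p + 1) * d)" using coprime_absorb_left by blast
      then show False using dpos by simp
    qed
  qed
  then show ?thesis by blast
qed

lemma memb_finite: "finite {p. memb c d M p}"
  by (rule finite_subset[of _ "{..<M}"]) (auto simp: memb_def)

section \<open>Inductive sets via finite staged justifications\<close>

definition stageok :: "(nat set \<Rightarrow> (nat \<Rightarrow> bool) \<Rightarrow> nat \<Rightarrow> bool) \<Rightarrow> nat set \<Rightarrow> (nat \<times> nat) set \<Rightarrow> bool" where
  "stageok Rl S F \<longleftrightarrow> (\<forall>i v. (i, v) \<in> F \<longrightarrow> Rl S (\<lambda>w. \<exists>j<i. (j, w) \<in> F) v)"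

definition ind :: "(nat set \<Rightarrow> (nat \<Rightarrow> bool) \<Rightarrow> nat \<Rightarrow> bool) \<Rightarrow> nat set \<Rightarrow> nat \<Rightarrow> bool" where
  "ind Rl S x \<longleftrightarrow> (\<exists>F i. finite F \<and> stageok Rl S F \<and> (i, x) \<in> F)"

definition monoR :: "(nat set \<Rightarrow> (nat \<Rightarrow> bool) \<Rightarrow> nat \<Rightarrow> bool) \<Rightarrow> bool" where
  "monoR Rl \<longleftrightarrow> (\<forall>S X Y v. (\<forall>w. X w \<longrightarrow> Y w) \<longrightarrow> Rl S X v \<longrightarrow> Rl S Y v)"

lemma ind_sound:
  assumes step: "\<And>X v. Rl S X v \<Longrightarrow> (\<And>w. X w \<Longrightarrow> Q w) \<Longrightarrow> Q v"
    and "ind Rl S x"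
  shows "Q x"
proof -
  obtain F i where F: "finite F" "stageok Rl S F" "(i, x) \<in> F"
    using assms(2) unfolding ind_def by blast
  have "\<forall>v. (i, v) \<in> F \<longrightarrow> Q v" for i
  proof (induct i rule: less_induct)
    case (less i)
    show ?case
    proof (intro allI impI)
      fix v assume "(i, v) \<in> F"
      then have "Rl S (\<lambda>w. \<exists>j<i. (j, w) \<in> F) v" using F(2) unfolding stageok_def by blast
      then show "Q v" by (rule step) (use less in blast)
    qed
  qed
  then show ?thesis using F(3) by blast
qed

lemma ind_closed:
  assumes mono: "monoR Rl" and fin: "finite A" and all: "\<forall>w\<in>A. ind Rl S w"
    and r: "Rl S (\<lambda>w. w \<in> A) v"
  shows "ind Rl S v"
proof -
  have "\<forall>w\<in>A. \<exists>Fi. finite (fst Fi) \<and> stageok Rl S (fst Fi) \<and> (snd Fi, w) \<in> fst Fi"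
    using all unfolding ind_def by auto
  from bchoice[OF this] obtain G where G0: "\<forall>w\<in>A. finite (fst (G w)) \<and> stageok Rl S (fst (G w)) \<and> (snd (G w), w) \<in> fst (G w)"
    by blast
  then have G: "\<And>w. w \<in> A \<Longrightarrow> finite (fst (G w)) \<and> stageok Rl S (fst (G w)) \<and> (snd (G w), w) \<in> fst (G w)"
    by blast
  define F where "F = (\<Union>w\<in>A. fst (G w))"
  have finF: "finite F" unfolding F_def using fin G by auto
  define N where "N = Suc (Max (insert 0 (fst ` F)))"
  have lt: "j < N" if "(j, u) \<in> F" for j u
  proof -
    have "j \<in> fst ` F" using that by force
    then have "j \<le> Max (insert 0 (fst ` F))" using finF by (simp add: Max_ge)
    then show ?thesis unfolding N_def by simp
  qed
  define F' where "F' = insert (N, v) F"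
  have "stageok Rl S F'"
    unfolding stageok_def
  proof (intro allI impI)
    fix i u assume iu: "(i, u) \<in> F'"
    show "Rl S (\<lambda>w. \<exists>j<i. (j, w) \<in> F') u"
    proof (cases "(i, u) \<in> F")
      case True
      then obtain w where w: "w \<in> A" "(i, u) \<in> fst (G w)" unfolding F_def by blast
      then have "Rl S (\<lambda>x. \<exists>j<i. (j, x) \<in> fst (G w)) u" using G[OF w(1)] unfolding stageok_def by blast
      then show ?thesis
        by (rule mono[unfolded monoR_def, rule_format, rotated]) (auto simp: F'_def F_def intro: w(1))
    next
      case False
      then have "i = N" "u = v" using iu unfolding F'_def by auto
      moreover have "\<forall>w. w \<in> A \<longrightarrow> (\<exists>j<N. (j, w) \<in> F')"
      proof (intro allI impI)
        fix w assume "w \<in> A"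
        then have "(snd (G w), w) \<in> F" using G unfolding F_def by blast
        then show "\<exists>j<N. (j, w) \<in> F'" using lt unfolding F'_def by blast
      qed
      ultimately show ?thesis
        using mono[unfolded monoR_def, rule_format, OF _ r, of "\<lambda>w. \<exists>j<i. (j, w) \<in> F'"] by blast
    qed
  qed
  moreover have "finite F'" using finF unfolding F'_def by simp
  ultimately show ?thesis unfolding ind_def F'_def by blast
qed

lemma ind_rule:
  assumes "monoR Rl" "Rl S (\<lambda>w. w \<in> set ws) v" "\<forall>w\<in>set ws. ind Rl S w"
  shows "ind Rl S v"
  using ind_closed[OF assms(1) _ assms(3) assms(2)] by simp

lemma indc_eq:
  "ind Rl S x \<longleftrightarrow> (\<exists>c d M i. memb c d M (prod_encode (i, x)) \<and>
     (\<forall>j v. memb c d M (prod_encode (j, v)) \<longrightarrow> Rl S (\<lambda>w. \<exists>k<j. memb c d M (prod_encode (k, w))) v))"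
proof
  assume "ind Rl S x"
  then obtain F i where F: "finite F" "stageok Rl S F" "(i, x) \<in> F" unfolding ind_def by blast
  obtain c d M where cd: "\<forall>p. memb c d M p \<longleftrightarrow> p \<in> prod_encode ` F"
    using code_exists[of "prod_encode ` F"] F(1) by blast
  have m: "memb c d M (prod_encode (j, v)) \<longleftrightarrow> (j, v) \<in> F" for j v
    using cd by (auto dest: inj_onD[OF inj_prod_encode])
  show "\<exists>c d M i. memb c d M (prod_encode (i, x)) \<and>
     (\<forall>j v. memb c d M (prod_encode (j, v)) \<longrightarrow> Rl S (\<lambda>w. \<exists>k<j. memb c d M (prod_encode (k, w))) v)"
    apply (rule exI[of _ c], rule exI[of _ d], rule exI[of _ M], rule exI[of _ i])
    using F(2,3) unfolding stageok_def m by blast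
next
  assume "\<exists>c d M i. memb c d M (prod_encode (i, x)) \<and>
     (\<forall>j v. memb c d M (prod_encode (j, v)) \<longrightarrow> Rl S (\<lambda>w. \<exists>k<j. memb c d M (prod_encode (k, w))) v)"
  then obtain c d M i where h: "memb c d M (prod_encode (i, x))"
    "\<forall>j v. memb c d M (prod_encode (j, v)) \<longrightarrow> Rl S (\<lambda>w. \<exists>k<j. memb c d M (prod_encode (k, w))) v"
    by blast
  define F where "F = {(j, v). memb c d M (prod_encode (j, v))}"
  have "F \<subseteq> prod_decode ` {p. memb c d M p}"
    unfolding F_def by (auto intro!: image_eqI[where x = "prod_encode _"])
  then have "finite F" using memb_finite finite_surj by blast
  moreover have "stageok Rl S F" unfolding stageok_def F_def using h(2) by simp
  moreover have "(i, x) \<in> F" unfolding F_def using h(1) by simp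
  ultimately show "ind Rl S x" unfolding ind_def by blast
qed

lemma dfn_ind:
  assumes "dfn (\<lambda>S e. Rl S (\<lambda>w. \<exists>k<e 0. memb (e 1) (e 2) (e 3) (prod_encode (k, w))) (e 4))"
  shows "dfn (\<lambda>S e. ind Rl S (e 0))"
proof -
  have r: "dfn (\<lambda>S e. Rl S (\<lambda>w. \<exists>k<e (Suc 0). memb (e (Suc (Suc (Suc (Suc (Suc 0))))))
      (e (Suc (Suc (Suc (Suc 0))))) (e (Suc (Suc (Suc 0)))) (prod_encode (k, w))) (e 0))"
    using dfn_ren[OF assms, where f = "\<lambda>n. if n = 0 then 1 else if n = 1 then 5 else if n = 2 then 4
       else if n = 3 then 3 else 0"]
    by (simp add: numeral_eq_Suc)
  have "dfn (\<lambda>S e. \<exists>c d M i. memb c d M (prod_encode (i, e 0)) \<and>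
     (\<forall>j v. memb c d M (prod_encode (j, v)) \<longrightarrow> Rl S (\<lambda>w. \<exists>k<j. memb c d M (prod_encode (k, w))) v))"
    by (intro dfn_intros) (rule r)
  then show ?thesis by (rule dfn_cong) (simp add: indc_eq)
qed

lemma dfn_ind_app:
  "dfn (\<lambda>S e. Rl S (\<lambda>w. \<exists>k<e 0. memb (e 1) (e 2) (e 3) (prod_encode (k, w))) (e 4)) \<Longrightarrow>
   dfnT a \<Longrightarrow> dfn (\<lambda>S e. ind Rl S (a e))"
  by (rule dfn_app1[OF dfn_ind])

section \<open>Translations\<close>

primrec trNT :: "(nat \<Rightarrow> nat) \<Rightarrow> aterm \<Rightarrow> tm" where
  "trNT G (AV x) = V (G x)"
| "trNT G AZ = Z"
| "trNT G (AS t) = Sc (trNT G t)"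
| "trNT G (AAdd s t) = Ad (trNT G s) (trNT G t)"
| "trNT G (AMul s t) = Mu (trNT G s) (trNT G t)"

primrec trN :: "(nat \<Rightarrow> nat) \<Rightarrow> aform \<Rightarrow> fo" where
  "trN G (AEq s t) = Eq (trNT G s) (trNT G t)"
| "trN G (ALt s t) = Ls (trNT G s) (trNT G t)"
| "trN G (AIn t) = Mem (trNT G t)"
| "trN G (ANot \<phi>) = Ng (trN G \<phi>)"
| "trN G (AAnd \<phi> \<psi>) = Cj (trN G \<phi>) (trN G \<psi>)"
| "trN G (AEx x \<phi>) = Ex (trN (\<lambda>y. if y = x then 0 else Suc (G y)) \<phi>)"

lemma evT_trNT: "evT d (trNT G t) = aeval (\<lambda>y. d (G y)) t"
  by (induct t) auto

lemma hold_trN: "hold S d (trN G \<phi>) = aholds S (\<lambda>y. d (G y)) \<phi>"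
proof (induct \<phi> arbitrary: G d)
  case (AEx x \<phi>)
  have "(\<lambda>y. econs n d (if y = x then 0 else Suc (G y))) = (\<lambda>y. d (G y))(x := n)" for n
    by (rule ext) simp
  then show ?case using AEx by simp
qed (auto simp: evT_trNT)

lemma first_order_aholds: "first_order \<phi> \<Longrightarrow> aholds S e \<phi> = aholds S' e \<phi>"
  by (induct \<phi> arbitrary: e) auto

lemma dfn_aform: "first_order \<phi> \<Longrightarrow> dfn (\<lambda>S e. aholds {} (\<lambda>_. e 0) \<phi>)"
  unfolding dfn_def
  by (rule exI[of _ "trN (\<lambda>_. 0) \<phi>"]) (simp add: hold_trN, metis first_order_aholds)

primrec trDT :: "nat \<Rightarrow> tm \<Rightarrow> aterm" where
  "trDT d (V i) = (if i < d then AV (d - 1 - i) else AZ)"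
| "trDT d Z = AZ"
| "trDT d (Sc t) = AS (trDT d t)"
| "trDT d (Ad s t) = AAdd (trDT d s) (trDT d t)"
| "trDT d (Mu s t) = AMul (trDT d s) (trDT d t)"

primrec trD :: "nat \<Rightarrow> fo \<Rightarrow> aform" where
  "trD d (Eq s t) = AEq (trDT d s) (trDT d t)"
| "trD d (Ls s t) = ALt (trDT d s) (trDT d t)"
| "trD d (Mem t) = AIn (trDT d t)"
| "trD d (Ng \<phi>) = ANot (trD d \<phi>)"
| "trD d (Cj \<phi> \<psi>) = AAnd (trD d \<phi>) (trD d \<psi>)"
| "trD d (Ex \<phi>) = AEx d (trD (Suc d) \<phi>)"

lemma evT_trDT:
  "(\<forall>i<d. g i = e (d - 1 - i)) \<Longrightarrow> (\<forall>i\<ge>d. g i = 0) \<Longrightarrow> evT g t = aeval e (trDT d t)"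
  by (induct t) auto

lemma hold_trD:
  "(\<forall>i<d. g i = e (d - 1 - i)) \<Longrightarrow> (\<forall>i\<ge>d. g i = 0) \<Longrightarrow> hold S g \<phi> = aholds S e (trD d \<phi>)"
proof (induct \<phi> arbitrary: d g e)
  case (Ex \<phi>)
  have "hold S (econs n g) \<phi> = aholds S (e(d := n)) (trD (Suc d) \<phi>)" for n
  proof (rule Ex(1))
    show "\<forall>i<Suc d. econs n g i = (e(d := n)) (Suc d - 1 - i)"
      using Ex(2) by (auto simp: econs_def split: nat.split)
    show "\<forall>i\<ge>Suc d. econs n g i = 0"
      using Ex(3) by (auto simp: econs_def split: nat.split)
  qed
  then show ?case by simp
qed (auto simp: evT_trDT)

lemma afv_trDT: "atfv (trDT d t) \<subseteq> {..<d}"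
  by (induct t) auto

lemma afv_trD: "afv (trD d \<phi>) \<subseteq> {..<d}"
proof (induct \<phi> arbitrary: d)
  case (Ex \<phi>)
  then show ?case by (force simp: less_Suc_eq)
qed (use afv_trDT in auto)

lemma dfn_closed:
  assumes "dfn (\<lambda>S e. P S)"
  shows "\<exists>\<Phi>. afv \<Phi> = {} \<and> (\<forall>S. aholds S (\<lambda>_. 0) \<Phi> = P S)"
proof -
  obtain \<phi> where h: "\<forall>S e. hold S e \<phi> = P S" using assms unfolding dfn_def by blast
  have "afv (trD 0 \<phi>) = {}" using afv_trD[of 0 \<phi>] by auto
  moreover have "aholds S (\<lambda>_. 0) (trD 0 \<phi>) = P S" for S
    using hold_trD[of 0 "\<lambda>_. 0" "\<lambda>_. 0" S \<phi>] h by simp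
  ultimately show ?thesis by blast
qed


abbreviation pe :: "nat \<Rightarrow> nat \<Rightarrow> nat" where "pe a b \<equiv> prod_encode (a, b)"

abbreviation lcode :: "trm list \<Rightarrow> nat" where "lcode ts \<equiv> list_encode (map enc_trm ts)"

lemma enc_trm_inj: "enc_trm s = enc_trm t \<longleftrightarrow> s = t"
proof (induct s arbitrary: t)
  case (TVar x)
  then show ?case by (cases t) auto
next
  case (TFn f ts)
  show ?case
  proof (cases t)
    case (TFn g us)
    have "\<And>us. map enc_trm ts = map enc_trm us \<Longrightarrow> ts = us"
      using TFn.hyps
    proof (induct ts)
      case (Cons a ts)
      then show ?case by (cases us) auto
    qed simp
    then show ?thesis using TFn by (auto simp: list_encode_eq)
  qed auto
next
  case (TCst c)
  then show ?case by (cases t) auto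
qed

lemma map_enc_inj: "map enc_trm ts = map enc_trm us \<longleftrightarrow> ts = us"
  by (rule inj_map_eq_map) (auto simp: inj_def enc_trm_inj)

lemma lcode_inj: "lcode ts = lcode us \<longleftrightarrow> ts = us"
  by (simp add: list_encode_eq map_enc_inj)

lemma enc_fm_inj: "enc_fm \<phi> = enc_fm \<psi> \<longleftrightarrow> \<phi> = \<psi>"
  by (induct \<phi> arbitrary: \<psi>; case_tac \<psi>; auto simp: enc_trm_inj lcode_inj list_encode_eq map_enc_inj)

lemma dec_trm[simp]:
  "enc_trm t = pe 0 y \<longleftrightarrow> t = TVar y"
  "enc_trm t = pe 2 c \<longleftrightarrow> t = TCst c"
  "enc_trm t = pe 1 (pe f l) \<longleftrightarrow> (\<exists>ts. t = TFn f ts \<and> l = lcode ts)"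
  "pe 0 y = enc_trm t \<longleftrightarrow> t = TVar y"
  "pe 2 c = enc_trm t \<longleftrightarrow> t = TCst c"
  "pe 1 (pe f l) = enc_trm t \<longleftrightarrow> (\<exists>ts. t = TFn f ts \<and> l = lcode ts)"
  by (cases t; auto)+

lemma dec_trm1[simp]:
  "enc_trm t = pe (Suc 0) (pe f l) \<longleftrightarrow> (\<exists>ts. t = TFn f ts \<and> l = lcode ts)"
  "pe (Suc 0) (pe f l) = enc_trm t \<longleftrightarrow> (\<exists>ts. t = TFn f ts \<and> l = lcode ts)"
  by (cases t; auto)+

lemma dec_list[simp]:
  "lcode ts = 0 \<longleftrightarrow> ts = []"
  "lcode ts = Suc (pe a l) \<longleftrightarrow> (\<exists>t us. ts = t # us \<and> a = enc_trm t \<and> l = lcode us)"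
  "0 = lcode ts \<longleftrightarrow> ts = []"
  "Suc (pe a l) = lcode ts \<longleftrightarrow> (\<exists>t us. ts = t # us \<and> a = enc_trm t \<and> l = lcode us)"
  by (cases ts; auto)+

lemma dec_fm[simp]:
  "enc_fm \<phi> = pe 0 (pe s u) \<longleftrightarrow> (\<exists>a b. \<phi> = FDist a b \<and> s = enc_trm a \<and> u = enc_trm b)"
  "enc_fm \<phi> = pe 1 (pe P l) \<longleftrightarrow> (\<exists>ts. \<phi> = FPred P ts \<and> l = lcode ts)"
  "enc_fm \<phi> = pe 2 p \<longleftrightarrow> (\<exists>\<psi>. \<phi> = FNeg \<psi> \<and> p = enc_fm \<psi>)"
  "enc_fm \<phi> = pe 3 p \<longleftrightarrow> (\<exists>\<psi>. \<phi> = FHalf \<psi> \<and> p = enc_fm \<psi>)"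
  "enc_fm \<phi> = pe 4 (pe p q) \<longleftrightarrow> (\<exists>\<psi> \<chi>. \<phi> = FMinus \<psi> \<chi> \<and> p = enc_fm \<psi> \<and> q = enc_fm \<chi>)"
  "enc_fm \<phi> = pe 5 (pe x p) \<longleftrightarrow> (\<exists>\<psi>. \<phi> = FSup x \<psi> \<and> p = enc_fm \<psi>)"
  "pe 0 (pe s u) = enc_fm \<phi> \<longleftrightarrow> (\<exists>a b. \<phi> = FDist a b \<and> s = enc_trm a \<and> u = enc_trm b)"
  "pe 1 (pe P l) = enc_fm \<phi> \<longleftrightarrow> (\<exists>ts. \<phi> = FPred P ts \<and> l = lcode ts)"
  "pe 2 p = enc_fm \<phi> \<longleftrightarrow> (\<exists>\<psi>. \<phi> = FNeg \<psi> \<and> p = enc_fm \<psi>)"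
  "pe 3 p = enc_fm \<phi> \<longleftrightarrow> (\<exists>\<psi>. \<phi> = FHalf \<psi> \<and> p = enc_fm \<psi>)"
  "pe 4 (pe p q) = enc_fm \<phi> \<longleftrightarrow> (\<exists>\<psi> \<chi>. \<phi> = FMinus \<psi> \<chi> \<and> p = enc_fm \<psi> \<and> q = enc_fm \<chi>)"
  "pe 5 (pe x p) = enc_fm \<phi> \<longleftrightarrow> (\<exists>\<psi>. \<phi> = FSup x \<psi> \<and> p = enc_fm \<psi>)"
  by (cases \<phi>; auto)+

lemma dec_fm1[simp]:
  "enc_fm \<phi> = pe (Suc 0) (pe P l) \<longleftrightarrow> (\<exists>ts. \<phi> = FPred P ts \<and> l = lcode ts)"
  "pe (Suc 0) (pe P l) = enc_fm \<phi> \<longleftrightarrow> (\<exists>ts. \<phi> = FPred P ts \<and> l = lcode ts)"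
  by (cases \<phi>; auto)+

lemma monoR_I:
  assumes "\<And>S X Y v. (\<And>w. X w \<longrightarrow> Y w) \<Longrightarrow> Rl S X v \<longrightarrow> Rl S Y v"
  shows "monoR Rl"
  using assms unfolding monoR_def by blast

definition Rl_pow :: "nat set \<Rightarrow> (nat \<Rightarrow> bool) \<Rightarrow> nat \<Rightarrow> bool" where
  "Rl_pow S X v \<longleftrightarrow> v = pe 0 1 \<or> (\<exists>m p. v = pe (Suc m) (2 * p) \<and> X (pe m p))"

lemma mono_pow: "monoR Rl_pow" by (rule monoR_I, unfold Rl_pow_def, intro conj_mono disj_mono ex_mono imp_refl; assumption)

lemma pow_sound: "ind Rl_pow S v \<Longrightarrow> \<exists>m. v = pe m (2 ^ m)"
proof (erule ind_sound[rotated])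
  fix X v assume r: "Rl_pow S X v" and ih: "\<And>w. X w \<Longrightarrow> \<exists>m. w = pe m (2 ^ m)"
  from r show "\<exists>m. v = pe m (2 ^ m)" unfolding Rl_pow_def by (auto dest!: ih)
qed

lemma pow_complete: "ind Rl_pow S (pe m (2 ^ m))"
proof (induct m)
  case 0
  show ?case by (rule ind_rule[OF mono_pow, where ws = "[]"]) (auto simp: Rl_pow_def)
next
  case (Suc m)
  show ?case
    apply (rule ind_rule[OF mono_pow, where ws = "[pe m (2 ^ m)]"])
     apply (unfold Rl_pow_def)[1]
     apply force
    using Suc by simp
qed

lemma pow_char: "ind Rl_pow S (pe m p) \<longleftrightarrow> p = 2 ^ m"
  using pow_sound[of S "pe m p"] pow_complete[of S m] by auto

lemma dfnT_pow[dfn_intros]: "dfnT a \<Longrightarrow> dfnT (\<lambda>e. 2 ^ a e)"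
proof -
  assume a: "dfnT a"
  have "dfn (\<lambda>S e. ind Rl_pow S (pe (a (\<lambda>i. e (Suc i))) (e 0)))"
    by (rule dfn_ind_app; (unfold Rl_pow_def)?; intro dfn_intros dfnT_ren[OF a])
  then show ?thesis unfolding dfnT_def by (rule dfn_cong) (auto simp: pow_char)
qed

section \<open>Free variables\<close>

definition Rl_fvt :: "nat set \<Rightarrow> (nat \<Rightarrow> bool) \<Rightarrow> nat \<Rightarrow> bool" where
  "Rl_fvt S X v \<longleftrightarrow>
    (\<exists>y. v = pe 0 (pe (pe 0 y) y)) \<or>
    (\<exists>f l y. v = pe 0 (pe (pe 1 (pe f l)) y) \<and> X (pe 1 (pe l y))) \<or>
    (\<exists>a l y. v = pe 1 (pe (Suc (pe a l)) y) \<and> (X (pe 0 (pe a y)) \<or> X (pe 1 (pe l y))))"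

lemma mono_fvt: "monoR Rl_fvt" by (rule monoR_I, unfold Rl_fvt_def, intro conj_mono disj_mono ex_mono imp_refl; assumption)

definition FvT :: "nat set \<Rightarrow> nat \<Rightarrow> nat \<Rightarrow> bool" where
  "FvT S n y \<longleftrightarrow> ind Rl_fvt S (pe 0 (pe n y))"
definition FvTL :: "nat set \<Rightarrow> nat \<Rightarrow> nat \<Rightarrow> bool" where
  "FvTL S n y \<longleftrightarrow> ind Rl_fvt S (pe 1 (pe n y))"

lemma fvt_sound0:
  assumes "ind Rl_fvt S v"
  shows "(\<forall>n y. v = pe 0 (pe n y) \<longrightarrow> (\<forall>t. n = enc_trm t \<longrightarrow> y \<in> fv_trm t)) \<and>
         (\<forall>l y. v = pe 1 (pe l y) \<longrightarrow> (\<forall>ts. l = lcode ts \<longrightarrow> (\<exists>t\<in>set ts. y \<in> fv_trm t)))"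
  using assms
proof (rule ind_sound[rotated])
  fix X v
  assume r: "Rl_fvt S X v" and ih: "\<And>w. X w \<Longrightarrow> (\<forall>n y. w = pe 0 (pe n y) \<longrightarrow> (\<forall>t. n = enc_trm t \<longrightarrow> y \<in> fv_trm t)) \<and>
         (\<forall>l y. w = pe 1 (pe l y) \<longrightarrow> (\<forall>ts. l = lcode ts \<longrightarrow> (\<exists>t\<in>set ts. y \<in> fv_trm t)))"
  from r show "(\<forall>n y. v = pe 0 (pe n y) \<longrightarrow> (\<forall>t. n = enc_trm t \<longrightarrow> y \<in> fv_trm t)) \<and>
         (\<forall>l y. v = pe 1 (pe l y) \<longrightarrow> (\<forall>ts. l = lcode ts \<longrightarrow> (\<exists>t\<in>set ts. y \<in> fv_trm t)))"
    unfolding Rl_fvt_def by (auto dest!: ih)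
qed

lemma fvt_complete: "y \<in> fv_trm t \<Longrightarrow> FvT S (enc_trm t) y"
proof (induct t)
  case (TVar x)
  then show ?case unfolding FvT_def
    by (intro ind_rule[OF mono_fvt, where ws = "[]"]) (auto simp: Rl_fvt_def)
next
  case (TFn f ts)
  have "\<And>us. set us \<subseteq> set ts \<Longrightarrow> (\<exists>t\<in>set us. y \<in> fv_trm t) \<Longrightarrow> FvTL S (lcode us) y"
  proof -
    fix us show "set us \<subseteq> set ts \<Longrightarrow> (\<exists>t\<in>set us. y \<in> fv_trm t) \<Longrightarrow> FvTL S (lcode us) y"
    proof (induct us)
      case (Cons u us)
      show ?case
      proof (cases "y \<in> fv_trm u")
        case True
        then have "FvT S (enc_trm u) y" using TFn(1) Cons(2) by auto
        then show ?thesis unfolding FvTL_def FvT_def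
          apply (intro ind_rule[OF mono_fvt, where ws = "[pe 0 (pe (enc_trm u) y)]"])
           apply (unfold Rl_fvt_def)[1]
          by auto
      next
        case False
        then have "FvTL S (lcode us) y" using Cons by auto
        then show ?thesis unfolding FvTL_def
          apply (intro ind_rule[OF mono_fvt, where ws = "[pe 1 (pe (lcode us) y)]"])
           apply (unfold Rl_fvt_def)[1]
          by auto
      qed
    qed simp
  qed
  then have "FvTL S (lcode ts) y" using TFn(2) by auto
  then show ?case unfolding FvTL_def FvT_def
    apply (intro ind_rule[OF mono_fvt, where ws = "[pe 1 (pe (lcode ts) y)]"])
     apply (unfold Rl_fvt_def)[1]
    by auto
qed simp

lemma fvt_iff: "FvT S (enc_trm t) y \<longleftrightarrow> y \<in> fv_trm t"
  using fvt_complete fvt_sound0 unfolding FvT_def by blast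

lemma fvtl_iff: "FvTL S (lcode ts) y \<longleftrightarrow> (\<exists>t\<in>set ts. y \<in> fv_trm t)"
proof
  assume "FvTL S (lcode ts) y" then show "\<exists>t\<in>set ts. y \<in> fv_trm t"
    using fvt_sound0 unfolding FvTL_def by blast
next
  assume "\<exists>t\<in>set ts. y \<in> fv_trm t"
  then show "FvTL S (lcode ts) y"
  proof (induct ts)
    case (Cons u us)
    show ?case
    proof (cases "y \<in> fv_trm u")
      case True
      then have "FvT S (enc_trm u) y" by (rule fvt_complete)
      then show ?thesis unfolding FvTL_def FvT_def
        apply (intro ind_rule[OF mono_fvt, where ws = "[pe 0 (pe (enc_trm u) y)]"])
         apply (unfold Rl_fvt_def)[1]
        by auto
    next
      case False
      then have "FvTL S (lcode us) y" using Cons by auto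
      then show ?thesis unfolding FvTL_def
        apply (intro ind_rule[OF mono_fvt, where ws = "[pe 1 (pe (lcode us) y)]"])
         apply (unfold Rl_fvt_def)[1]
        by auto
    qed
  qed simp
qed

lemma dfn_FvT[dfn_intros]: "dfnT a \<Longrightarrow> dfnT b \<Longrightarrow> dfn (\<lambda>S e. FvT S (a e) (b e))"
  unfolding FvT_def by (rule dfn_ind_app; (unfold Rl_fvt_def)?; (intro dfn_intros)?)
lemma dfn_FvTL[dfn_intros]: "dfnT a \<Longrightarrow> dfnT b \<Longrightarrow> dfn (\<lambda>S e. FvTL S (a e) (b e))"
  unfolding FvTL_def by (rule dfn_ind_app; (unfold Rl_fvt_def)?; (intro dfn_intros)?)

definition Rl_fvf :: "nat set \<Rightarrow> (nat \<Rightarrow> bool) \<Rightarrow> nat \<Rightarrow> bool" where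
  "Rl_fvf S X v \<longleftrightarrow>
    (\<exists>s u y. v = pe (pe 0 (pe s u)) y \<and> (FvT S s y \<or> FvT S u y)) \<or>
    (\<exists>P l y. v = pe (pe 1 (pe P l)) y \<and> FvTL S l y) \<or>
    (\<exists>p y. v = pe (pe 2 p) y \<and> X (pe p y)) \<or>
    (\<exists>p y. v = pe (pe 3 p) y \<and> X (pe p y)) \<or>
    (\<exists>p q y. v = pe (pe 4 (pe p q)) y \<and> (X (pe p y) \<or> X (pe q y))) \<or>
    (\<exists>x p y. v = pe (pe 5 (pe x p)) y \<and> y \<noteq> x \<and> X (pe p y))"

lemma mono_fvf: "monoR Rl_fvf" by (rule monoR_I, unfold Rl_fvf_def, intro conj_mono disj_mono ex_mono imp_refl; assumption)

definition FvF :: "nat set \<Rightarrow> nat \<Rightarrow> nat \<Rightarrow> bool" where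
  "FvF S n y \<longleftrightarrow> ind Rl_fvf S (pe n y)"

lemma fvf_sound0:
  assumes "ind Rl_fvf S v"
  shows "\<forall>n y. v = pe n y \<longrightarrow> (\<forall>\<phi>. n = enc_fm \<phi> \<longrightarrow> y \<in> fv_fm \<phi>)"
  using assms
proof (rule ind_sound[rotated])
  fix X v
  assume r: "Rl_fvf S X v" and ih: "\<And>w. X w \<Longrightarrow> \<forall>n y. w = pe n y \<longrightarrow> (\<forall>\<phi>. n = enc_fm \<phi> \<longrightarrow> y \<in> fv_fm \<phi>)"
  from r show "\<forall>n y. v = pe n y \<longrightarrow> (\<forall>\<phi>. n = enc_fm \<phi> \<longrightarrow> y \<in> fv_fm \<phi>)"
    unfolding Rl_fvf_def by (auto dest!: ih simp: fvt_iff fvtl_iff)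
qed

lemma fvf_complete: "y \<in> fv_fm \<phi> \<Longrightarrow> FvF S (enc_fm \<phi>) y"
  unfolding FvF_def
proof (induct \<phi>)
  case (FDist s u)
  then show ?case
    by (intro ind_rule[OF mono_fvf, where ws = "[]"]) (auto simp: Rl_fvf_def fvt_iff)
next
  case (FPred P ts)
  then show ?case
    by (intro ind_rule[OF mono_fvf, where ws = "[]"]) (auto simp: Rl_fvf_def fvtl_iff)
next
  case (FNeg \<phi>)
  then show ?case
    apply (intro ind_rule[OF mono_fvf, where ws = "[pe (enc_fm \<phi>) y]"])
     apply (unfold Rl_fvf_def)[1]
    by auto
next
  case (FHalf \<phi>)
  then show ?case
    apply (intro ind_rule[OF mono_fvf, where ws = "[pe (enc_fm \<phi>) y]"])
     apply (unfold Rl_fvf_def)[1]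
    by auto
next
  case (FMinus \<phi> \<psi>)
  show ?case
  proof (cases "y \<in> fv_fm \<phi>")
    case True
    then show ?thesis using FMinus
      apply (intro ind_rule[OF mono_fvf, where ws = "[pe (enc_fm \<phi>) y]"])
       apply (unfold Rl_fvf_def)[1]
      by auto
  next
    case False
    then show ?thesis using FMinus
      apply (intro ind_rule[OF mono_fvf, where ws = "[pe (enc_fm \<psi>) y]"])
       apply (unfold Rl_fvf_def)[1]
      by auto
  qed
next
  case (FSup x \<phi>)
  then show ?case
    apply (intro ind_rule[OF mono_fvf, where ws = "[pe (enc_fm \<phi>) y]"])
     apply (unfold Rl_fvf_def)[1]
    by auto
qed

lemma fvf_iff: "FvF S (enc_fm \<phi>) y \<longleftrightarrow> y \<in> fv_fm \<phi>"
  using fvf_complete fvf_sound0 unfolding FvF_def by blast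

lemma dfn_FvF[dfn_intros]: "dfnT a \<Longrightarrow> dfnT b \<Longrightarrow> dfn (\<lambda>S e. FvF S (a e) (b e))"
  unfolding FvF_def by (rule dfn_ind_app; (unfold Rl_fvf_def)?; (intro dfn_intros)?)

section \<open>Substitution\<close>

definition Rl_sbt :: "nat set \<Rightarrow> (nat \<Rightarrow> bool) \<Rightarrow> nat \<Rightarrow> bool" where
  "Rl_sbt S X v \<longleftrightarrow>
    (\<exists>x t. v = pe 0 (pe x (pe t (pe (pe 0 x) t)))) \<or>
    (\<exists>x t y. y \<noteq> x \<and> v = pe 0 (pe x (pe t (pe (pe 0 y) (pe 0 y))))) \<or>
    (\<exists>x t c. v = pe 0 (pe x (pe t (pe (pe 2 c) (pe 2 c))))) \<or>
    (\<exists>x t f l l'. v = pe 0 (pe x (pe t (pe (pe 1 (pe f l)) (pe 1 (pe f l'))))) \<and> X (pe 1 (pe x (pe t (pe l l'))))) \<or>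
    (\<exists>x t. v = pe 1 (pe x (pe t (pe 0 0)))) \<or>
    (\<exists>x t a a' l l'. v = pe 1 (pe x (pe t (pe (Suc (pe a l)) (Suc (pe a' l'))))) \<and>
        X (pe 0 (pe x (pe t (pe a a')))) \<and> X (pe 1 (pe x (pe t (pe l l')))))"

lemma mono_sbt: "monoR Rl_sbt" by (rule monoR_I, unfold Rl_sbt_def, intro conj_mono disj_mono ex_mono imp_refl; assumption)

definition SbT :: "nat set \<Rightarrow> nat \<Rightarrow> nat \<Rightarrow> nat \<Rightarrow> nat \<Rightarrow> bool" where
  "SbT S x t s s' \<longleftrightarrow> ind Rl_sbt S (pe 0 (pe x (pe t (pe s s'))))"
definition SbTL :: "nat set \<Rightarrow> nat \<Rightarrow> nat \<Rightarrow> nat \<Rightarrow> nat \<Rightarrow> bool" where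
  "SbTL S x t s s' \<longleftrightarrow> ind Rl_sbt S (pe 1 (pe x (pe t (pe s s'))))"

lemma sbt_sound0:
  assumes "ind Rl_sbt S v"
  shows "(\<forall>x t s s'. v = pe 0 (pe x (pe t (pe s s'))) \<longrightarrow> (\<forall>\<tau> \<sigma>. t = enc_trm \<tau> \<longrightarrow> s = enc_trm \<sigma> \<longrightarrow> s' = enc_trm (subst_trm x \<tau> \<sigma>))) \<and>
         (\<forall>x t s s'. v = pe 1 (pe x (pe t (pe s s'))) \<longrightarrow> (\<forall>\<tau> ts. t = enc_trm \<tau> \<longrightarrow> s = lcode ts \<longrightarrow> s' = lcode (map (subst_trm x \<tau>) ts)))"
  using assms
proof (rule ind_sound[rotated])
  fix X v
  assume r: "Rl_sbt S X v" and ih: "\<And>w. X w \<Longrightarrow> (\<forall>x t s s'. w = pe 0 (pe x (pe t (pe s s'))) \<longrightarrow> (\<forall>\<tau> \<sigma>. t = enc_trm \<tau> \<longrightarrow> s = enc_trm \<sigma> \<longrightarrow> s' = enc_trm (subst_trm x \<tau> \<sigma>))) \<and>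
         (\<forall>x t s s'. w = pe 1 (pe x (pe t (pe s s'))) \<longrightarrow> (\<forall>\<tau> ts. t = enc_trm \<tau> \<longrightarrow> s = lcode ts \<longrightarrow> s' = lcode (map (subst_trm x \<tau>) ts)))"
  from r show "(\<forall>x t s s'. v = pe 0 (pe x (pe t (pe s s'))) \<longrightarrow> (\<forall>\<tau> \<sigma>. t = enc_trm \<tau> \<longrightarrow> s = enc_trm \<sigma> \<longrightarrow> s' = enc_trm (subst_trm x \<tau> \<sigma>))) \<and>
         (\<forall>x t s s'. v = pe 1 (pe x (pe t (pe s s'))) \<longrightarrow> (\<forall>\<tau> ts. t = enc_trm \<tau> \<longrightarrow> s = lcode ts \<longrightarrow> s' = lcode (map (subst_trm x \<tau>) ts)))"
    unfolding Rl_sbt_def by (auto dest!: ih)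
qed

lemma sbt_complete: "SbT S x (enc_trm \<tau>) (enc_trm \<sigma>) (enc_trm (subst_trm x \<tau> \<sigma>))"
  unfolding SbT_def
proof (induct \<sigma>)
  case (TVar y)
  then show ?case
    by (intro ind_rule[OF mono_sbt, where ws = "[]"]) (auto simp: Rl_sbt_def)
next
  case (TCst c)
  then show ?case
    by (intro ind_rule[OF mono_sbt, where ws = "[]"]) (auto simp: Rl_sbt_def)
next
  case (TFn f ts)
  have "\<And>us. set us \<subseteq> set ts \<Longrightarrow> ind Rl_sbt S (pe 1 (pe x (pe (enc_trm \<tau>) (pe (lcode us) (lcode (map (subst_trm x \<tau>) us))))))"
  proof -
    fix us show "set us \<subseteq> set ts \<Longrightarrow> ind Rl_sbt S (pe 1 (pe x (pe (enc_trm \<tau>) (pe (lcode us) (lcode (map (subst_trm x \<tau>) us))))))"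
    proof (induct us)
      case Nil
      then show ?case
        by (intro ind_rule[OF mono_sbt, where ws = "[]"]) (auto simp: Rl_sbt_def)
    next
      case (Cons u us)
      then have h1: "ind Rl_sbt S (pe 0 (pe x (pe (enc_trm \<tau>) (pe (enc_trm u) (enc_trm (subst_trm x \<tau> u))))))"
        and h2: "ind Rl_sbt S (pe 1 (pe x (pe (enc_trm \<tau>) (pe (lcode us) (lcode (map (subst_trm x \<tau>) us))))))"
        using TFn by auto
      show ?case
        apply (rule ind_rule[OF mono_sbt, where ws = "[pe 0 (pe x (pe (enc_trm \<tau>) (pe (enc_trm u) (enc_trm (subst_trm x \<tau> u))))),
            pe 1 (pe x (pe (enc_trm \<tau>) (pe (lcode us) (lcode (map (subst_trm x \<tau>) us)))))]"])
         apply (unfold Rl_sbt_def)[1]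
        using h1 h2 by auto
    qed
  qed
  then have h: "ind Rl_sbt S (pe 1 (pe x (pe (enc_trm \<tau>) (pe (lcode ts) (lcode (map (subst_trm x \<tau>) ts))))))" by simp
  show ?case
    apply (rule ind_rule[OF mono_sbt, where ws = "[pe 1 (pe x (pe (enc_trm \<tau>) (pe (lcode ts) (lcode (map (subst_trm x \<tau>) ts)))))]"])
     apply (unfold Rl_sbt_def)[1]
    using h by auto
qed

lemma sbtl_complete: "SbTL S x (enc_trm \<tau>) (lcode ts) (lcode (map (subst_trm x \<tau>) ts))"
  unfolding SbTL_def
proof (induct ts)
  case Nil
  then show ?case
    by (intro ind_rule[OF mono_sbt, where ws = "[]"]) (auto simp: Rl_sbt_def)
next
  case (Cons u us)
  have h1: "ind Rl_sbt S (pe 0 (pe x (pe (enc_trm \<tau>) (pe (enc_trm u) (enc_trm (subst_trm x \<tau> u))))))"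
    using sbt_complete unfolding SbT_def by blast
  show ?case
    apply (rule ind_rule[OF mono_sbt, where ws = "[pe 0 (pe x (pe (enc_trm \<tau>) (pe (enc_trm u) (enc_trm (subst_trm x \<tau> u))))),
        pe 1 (pe x (pe (enc_trm \<tau>) (pe (lcode us) (lcode (map (subst_trm x \<tau>) us)))))]"])
     apply (unfold Rl_sbt_def)[1]
    using h1 Cons by auto
qed

lemma sbt_iff: "SbT S x (enc_trm \<tau>) (enc_trm \<sigma>) s' \<longleftrightarrow> s' = enc_trm (subst_trm x \<tau> \<sigma>)"
proof
  assume "SbT S x (enc_trm \<tau>) (enc_trm \<sigma>) s'"
  then show "s' = enc_trm (subst_trm x \<tau> \<sigma>)"
    unfolding SbT_def by (rule sbt_sound0[THEN conjunct1, rule_format, OF _ refl refl refl])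
qed (use sbt_complete in simp)

lemma sbtl_iff: "SbTL S x (enc_trm \<tau>) (lcode ts) s' \<longleftrightarrow> s' = lcode (map (subst_trm x \<tau>) ts)"
proof
  assume "SbTL S x (enc_trm \<tau>) (lcode ts) s'"
  then show "s' = lcode (map (subst_trm x \<tau>) ts)"
    unfolding SbTL_def by (rule sbt_sound0[THEN conjunct2, rule_format, OF _ refl refl refl])
qed (use sbtl_complete in simp)

lemma dfn_SbT[dfn_intros]: "dfnT x \<Longrightarrow> dfnT a \<Longrightarrow> dfnT b \<Longrightarrow> dfnT c \<Longrightarrow> dfn (\<lambda>S e. SbT S (x e) (a e) (b e) (c e))"
  unfolding SbT_def by (rule dfn_ind_app; (unfold Rl_sbt_def)?; (intro dfn_intros)?)
lemma dfn_SbTL[dfn_intros]: "dfnT x \<Longrightarrow> dfnT a \<Longrightarrow> dfnT b \<Longrightarrow> dfnT c \<Longrightarrow> dfn (\<lambda>S e. SbTL S (x e) (a e) (b e) (c e))"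
  unfolding SbTL_def by (rule dfn_ind_app; (unfold Rl_sbt_def)?; (intro dfn_intros)?)

definition Rl_sbf :: "nat set \<Rightarrow> (nat \<Rightarrow> bool) \<Rightarrow> nat \<Rightarrow> bool" where
  "Rl_sbf S X v \<longleftrightarrow>
    (\<exists>x t s u s' u'. v = pe x (pe t (pe (pe 0 (pe s u)) (pe 0 (pe s' u')))) \<and> SbT S x t s s' \<and> SbT S x t u u') \<or>
    (\<exists>x t P l l'. v = pe x (pe t (pe (pe 1 (pe P l)) (pe 1 (pe P l')))) \<and> SbTL S x t l l') \<or>
    (\<exists>x t p p'. v = pe x (pe t (pe (pe 2 p) (pe 2 p'))) \<and> X (pe x (pe t (pe p p')))) \<or>
    (\<exists>x t p p'. v = pe x (pe t (pe (pe 3 p) (pe 3 p'))) \<and> X (pe x (pe t (pe p p')))) \<or>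
    (\<exists>x t p q p' q'. v = pe x (pe t (pe (pe 4 (pe p q)) (pe 4 (pe p' q')))) \<and>
        X (pe x (pe t (pe p p'))) \<and> X (pe x (pe t (pe q q')))) \<or>
    (\<exists>x t p. v = pe x (pe t (pe (pe 5 (pe x p)) (pe 5 (pe x p))))) \<or>
    (\<exists>x t y p p'. y \<noteq> x \<and> v = pe x (pe t (pe (pe 5 (pe y p)) (pe 5 (pe y p')))) \<and> X (pe x (pe t (pe p p'))))"

lemma mono_sbf: "monoR Rl_sbf" by (rule monoR_I, unfold Rl_sbf_def, intro conj_mono disj_mono ex_mono imp_refl; assumption)

definition SbF :: "nat set \<Rightarrow> nat \<Rightarrow> nat \<Rightarrow> nat \<Rightarrow> nat \<Rightarrow> bool" where
  "SbF S x t n n' \<longleftrightarrow> ind Rl_sbf S (pe x (pe t (pe n n')))"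

lemma sbf_sound0:
  assumes "ind Rl_sbf S v"
  shows "\<forall>x t n n'. v = pe x (pe t (pe n n')) \<longrightarrow> (\<forall>\<tau> \<phi>. t = enc_trm \<tau> \<longrightarrow> n = enc_fm \<phi> \<longrightarrow> n' = enc_fm (subst_fm x \<tau> \<phi>))"
  using assms
proof (rule ind_sound[rotated])
  fix X v
  assume r: "Rl_sbf S X v" and ih: "\<And>w. X w \<Longrightarrow> \<forall>x t n n'. w = pe x (pe t (pe n n')) \<longrightarrow> (\<forall>\<tau> \<phi>. t = enc_trm \<tau> \<longrightarrow> n = enc_fm \<phi> \<longrightarrow> n' = enc_fm (subst_fm x \<tau> \<phi>))"
  from r show "\<forall>x t n n'. v = pe x (pe t (pe n n')) \<longrightarrow> (\<forall>\<tau> \<phi>. t = enc_trm \<tau> \<longrightarrow> n = enc_fm \<phi> \<longrightarrow> n' = enc_fm (subst_fm x \<tau> \<phi>))"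
    unfolding Rl_sbf_def by (auto dest!: ih simp: sbt_iff sbtl_iff)
qed

lemma sbf_complete: "SbF S x (enc_trm \<tau>) (enc_fm \<phi>) (enc_fm (subst_fm x \<tau> \<phi>))"
  unfolding SbF_def
proof (induct \<phi>)
  case (FDist s u)
  then show ?case
    by (intro ind_rule[OF mono_sbf, where ws = "[]"]) (auto simp: Rl_sbf_def sbt_iff)
next
  case (FPred P ts)
  then show ?case
    by (intro ind_rule[OF mono_sbf, where ws = "[]"]) (auto simp: Rl_sbf_def sbtl_iff)
next
  case (FNeg \<phi>)
  then show ?case
    apply (intro ind_rule[OF mono_sbf, where ws = "[pe x (pe (enc_trm \<tau>) (pe (enc_fm \<phi>) (enc_fm (subst_fm x \<tau> \<phi>))))]"])
     apply (unfold Rl_sbf_def)[1]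
    by auto
next
  case (FHalf \<phi>)
  then show ?case
    apply (intro ind_rule[OF mono_sbf, where ws = "[pe x (pe (enc_trm \<tau>) (pe (enc_fm \<phi>) (enc_fm (subst_fm x \<tau> \<phi>))))]"])
     apply (unfold Rl_sbf_def)[1]
    by auto
next
  case (FMinus \<phi> \<psi>)
  then show ?case
    apply (intro ind_rule[OF mono_sbf, where ws = "[pe x (pe (enc_trm \<tau>) (pe (enc_fm \<phi>) (enc_fm (subst_fm x \<tau> \<phi>)))),
       pe x (pe (enc_trm \<tau>) (pe (enc_fm \<psi>) (enc_fm (subst_fm x \<tau> \<psi>))))]"])
     apply (unfold Rl_sbf_def)[1]
    by auto
next
  case (FSup y \<phi>)
  show ?case
  proof (cases "y = x")
    case True
    then show ?thesis
      by (intro ind_rule[OF mono_sbf, where ws = "[]"]) (auto simp: Rl_sbf_def)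
  next
    case False
    then show ?thesis using FSup
      apply (intro ind_rule[OF mono_sbf, where ws = "[pe x (pe (enc_trm \<tau>) (pe (enc_fm \<phi>) (enc_fm (subst_fm x \<tau> \<phi>))))]"])
       apply (unfold Rl_sbf_def)[1]
      by auto
  qed
qed

lemma sbf_iff: "SbF S x (enc_trm \<tau>) (enc_fm \<phi>) n' \<longleftrightarrow> n' = enc_fm (subst_fm x \<tau> \<phi>)"
proof
  assume "SbF S x (enc_trm \<tau>) (enc_fm \<phi>) n'"
  then show "n' = enc_fm (subst_fm x \<tau> \<phi>)"
    unfolding SbF_def by (rule sbf_sound0[rule_format, OF _ refl refl refl])
qed (use sbf_complete in simp)

lemma dfn_SbF[dfn_intros]: "dfnT x \<Longrightarrow> dfnT a \<Longrightarrow> dfnT b \<Longrightarrow> dfnT c \<Longrightarrow> dfn (\<lambda>S e. SbF S (x e) (a e) (b e) (c e))"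
  unfolding SbF_def by (rule dfn_ind_app; (unfold Rl_sbf_def)?; (intro dfn_intros)?)

definition Rl_ff :: "nat set \<Rightarrow> (nat \<Rightarrow> bool) \<Rightarrow> nat \<Rightarrow> bool" where
  "Rl_ff S X v \<longleftrightarrow>
    (\<exists>x t s u. v = pe x (pe t (pe 0 (pe s u)))) \<or>
    (\<exists>x t P l. v = pe x (pe t (pe 1 (pe P l)))) \<or>
    (\<exists>x t p. v = pe x (pe t (pe 2 p)) \<and> X (pe x (pe t p))) \<or>
    (\<exists>x t p. v = pe x (pe t (pe 3 p)) \<and> X (pe x (pe t p))) \<or>
    (\<exists>x t p q. v = pe x (pe t (pe 4 (pe p q))) \<and> X (pe x (pe t p)) \<and> X (pe x (pe t q))) \<or>
    (\<exists>x t y p. v = pe x (pe t (pe 5 (pe y p))) \<and> (\<not> FvF S p x \<or> x = y)) \<or>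
    (\<exists>x t y p. v = pe x (pe t (pe 5 (pe y p))) \<and> \<not> FvT S t y \<and> X (pe x (pe t p)))"

lemma mono_ff: "monoR Rl_ff" by (rule monoR_I, unfold Rl_ff_def, intro conj_mono disj_mono ex_mono imp_refl; assumption)

definition FF :: "nat set \<Rightarrow> nat \<Rightarrow> nat \<Rightarrow> nat \<Rightarrow> bool" where
  "FF S x t n \<longleftrightarrow> ind Rl_ff S (pe x (pe t n))"

lemma ff_sound0:
  assumes "ind Rl_ff S v"
  shows "\<forall>x t n. v = pe x (pe t n) \<longrightarrow> (\<forall>\<tau> \<phi>. t = enc_trm \<tau> \<longrightarrow> n = enc_fm \<phi> \<longrightarrow> free_for x \<tau> \<phi>)"
  using assms
proof (rule ind_sound[rotated])
  fix X v
  assume r: "Rl_ff S X v" and ih: "\<And>w. X w \<Longrightarrow> \<forall>x t n. w = pe x (pe t n) \<longrightarrow> (\<forall>\<tau> \<phi>. t = enc_trm \<tau> \<longrightarrow> n = enc_fm \<phi> \<longrightarrow> free_for x \<tau> \<phi>)"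
  from r show "\<forall>x t n. v = pe x (pe t n) \<longrightarrow> (\<forall>\<tau> \<phi>. t = enc_trm \<tau> \<longrightarrow> n = enc_fm \<phi> \<longrightarrow> free_for x \<tau> \<phi>)"
    unfolding Rl_ff_def by (auto dest!: ih simp: fvt_iff fvf_iff)
qed

lemma ff_complete: "free_for x \<tau> \<phi> \<Longrightarrow> FF S x (enc_trm \<tau>) (enc_fm \<phi>)"
  unfolding FF_def
proof (induct \<phi>)
  case (FDist s u)
  then show ?case
    by (intro ind_rule[OF mono_ff, where ws = "[]"]) (auto simp: Rl_ff_def)
next
  case (FPred P ts)
  then show ?case
    by (intro ind_rule[OF mono_ff, where ws = "[]"]) (auto simp: Rl_ff_def)
next
  case (FNeg \<phi>)
  then show ?case
    apply (intro ind_rule[OF mono_ff, where ws = "[pe x (pe (enc_trm \<tau>) (enc_fm \<phi>))]"])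
     apply (unfold Rl_ff_def)[1]
    by auto
next
  case (FHalf \<phi>)
  then show ?case
    apply (intro ind_rule[OF mono_ff, where ws = "[pe x (pe (enc_trm \<tau>) (enc_fm \<phi>))]"])
     apply (unfold Rl_ff_def)[1]
    by auto
next
  case (FMinus \<phi> \<psi>)
  then show ?case
    apply (intro ind_rule[OF mono_ff, where ws = "[pe x (pe (enc_trm \<tau>) (enc_fm \<phi>)), pe x (pe (enc_trm \<tau>) (enc_fm \<psi>))]"])
     apply (unfold Rl_ff_def)[1]
    by auto
next
  case (FSup y \<phi>)
  show ?case
  proof (cases "x \<notin> fv_fm (FSup y \<phi>)")
    case True
    then show ?thesis
      by (intro ind_rule[OF mono_ff, where ws = "[]"]) (auto simp: Rl_ff_def fvf_iff)
  next
    case False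
    then have "y \<notin> fv_trm \<tau>" "free_for x \<tau> \<phi>" using FSup(2) by auto
    then show ?thesis using FSup(1)
      apply (intro ind_rule[OF mono_ff, where ws = "[pe x (pe (enc_trm \<tau>) (enc_fm \<phi>))]"])
       apply (unfold Rl_ff_def)[1]
      by (auto simp: fvt_iff)
  qed
qed

lemma ff_iff: "FF S x (enc_trm \<tau>) (enc_fm \<phi>) \<longleftrightarrow> free_for x \<tau> \<phi>"
proof
  assume "FF S x (enc_trm \<tau>) (enc_fm \<phi>)"
  then show "free_for x \<tau> \<phi>"
    unfolding FF_def by (rule ff_sound0[rule_format, OF _ refl refl refl])
qed (rule ff_complete)

lemma dfn_FF[dfn_intros]: "dfnT x \<Longrightarrow> dfnT a \<Longrightarrow> dfnT b \<Longrightarrow> dfn (\<lambda>S e. FF S (x e) (a e) (b e))"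
  unfolding FF_def by (rule dfn_ind_app; (unfold Rl_ff_def)?; (intro dfn_intros)?)

definition Rl_qf :: "nat set \<Rightarrow> (nat \<Rightarrow> bool) \<Rightarrow> nat \<Rightarrow> bool" where
  "Rl_qf S X v \<longleftrightarrow>
    (\<exists>s u. v = pe 0 (pe s u)) \<or> (\<exists>P l. v = pe 1 (pe P l)) \<or>
    (\<exists>p. v = pe 2 p \<and> X p) \<or> (\<exists>p. v = pe 3 p \<and> X p) \<or>
    (\<exists>p q. v = pe 4 (pe p q) \<and> X p \<and> X q)"

lemma mono_qf: "monoR Rl_qf" by (rule monoR_I, unfold Rl_qf_def, intro conj_mono disj_mono ex_mono imp_refl; assumption)

lemma qf_sound0:
  assumes "ind Rl_qf S v"
  shows "\<forall>\<phi>. v = enc_fm \<phi> \<longrightarrow> qfree \<phi>"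
  using assms
proof (rule ind_sound[rotated])
  fix X v
  assume r: "Rl_qf S X v" and ih: "\<And>w. X w \<Longrightarrow> \<forall>\<phi>. w = enc_fm \<phi> \<longrightarrow> qfree \<phi>"
  from r show "\<forall>\<phi>. v = enc_fm \<phi> \<longrightarrow> qfree \<phi>"
    unfolding Rl_qf_def
    apply (elim disjE exE conjE)
    apply force
    apply force
    apply (force dest: ih)
    apply (force dest: ih)
    apply (force dest: ih)
    done
qed

lemma qf_complete: "qfree \<phi> \<Longrightarrow> ind Rl_qf S (enc_fm \<phi>)"
proof (induct \<phi>)
  case (FNeg \<phi>)
  then show ?case
    apply (intro ind_rule[OF mono_qf, where ws = "[enc_fm \<phi>]"])
     apply (unfold Rl_qf_def)[1]
    by auto
next
  case (FHalf \<phi>)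
  then show ?case
    apply (intro ind_rule[OF mono_qf, where ws = "[enc_fm \<phi>]"])
     apply (unfold Rl_qf_def)[1]
    by auto
next
  case (FMinus \<phi> \<psi>)
  then show ?case
    apply (intro ind_rule[OF mono_qf, where ws = "[enc_fm \<phi>, enc_fm \<psi>]"])
     apply (unfold Rl_qf_def)[1]
    by auto
next
  case (FDist s u)
  show ?case by (rule ind_rule[OF mono_qf, where ws = "[]"]) (auto simp: Rl_qf_def)
next
  case (FPred P ts)
  show ?case by (rule ind_rule[OF mono_qf, where ws = "[]"]) (auto simp: Rl_qf_def)
qed simp

lemma qf_iff: "ind Rl_qf S (enc_fm \<phi>) \<longleftrightarrow> qfree \<phi>"
  using qf_sound0[rule_format, OF _ refl] qf_complete by (intro iffI)

definition Rl_un :: "nat set \<Rightarrow> (nat \<Rightarrow> bool) \<Rightarrow> nat \<Rightarrow> bool" where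
  "Rl_un S X v \<longleftrightarrow> ind Rl_qf S v \<or> (\<exists>x p. v = pe 5 (pe x p) \<and> X p)"

lemma mono_un: "monoR Rl_un" by (rule monoR_I, unfold Rl_un_def, intro conj_mono disj_mono ex_mono imp_refl; assumption)

lemma qfree_universal: "qfree \<phi> \<Longrightarrow> universal \<phi>"
  by (cases \<phi>) auto

lemma un_sound0:
  assumes "ind Rl_un S v"
  shows "\<forall>\<phi>. v = enc_fm \<phi> \<longrightarrow> universal \<phi>"
  using assms
proof (rule ind_sound[rotated])
  fix X v
  assume r: "Rl_un S X v" and ih: "\<And>w. X w \<Longrightarrow> \<forall>\<phi>. w = enc_fm \<phi> \<longrightarrow> universal \<phi>"
  from r show "\<forall>\<phi>. v = enc_fm \<phi> \<longrightarrow> universal \<phi>"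
    unfolding Rl_un_def
  proof (elim disjE exE conjE)
    assume "ind Rl_qf S v" then show ?thesis by (auto simp: qf_iff qfree_universal)
  next
    fix x p assume v: "v = pe 5 (pe x p)" "X p"
    show ?thesis
    proof (intro allI impI)
      fix \<phi> assume "v = enc_fm \<phi>"
      then obtain \<psi> where "\<phi> = FSup x \<psi>" "p = enc_fm \<psi>" using v(1) by auto
      then show "universal \<phi>" using ih[OF v(2)] by simp
    qed
  qed
qed

lemma un_complete: "universal \<phi> \<Longrightarrow> ind Rl_un S (enc_fm \<phi>)"
proof (induct \<phi>)
  case (FSup x \<phi>)
  then have h: "ind Rl_un S (enc_fm \<phi>)" by simp
  show ?case
    apply (rule ind_rule[OF mono_un, where ws = "[enc_fm \<phi>]"])
     apply (unfold Rl_un_def)[1]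
     apply (rule disjI2, rule exI[of _ x], rule exI[of _ "enc_fm \<phi>"])
     apply simp
    using h by simp
next
  case (FDist s u)
  then have "ind Rl_qf S (enc_fm (FDist s u))" by (intro qf_complete) simp
  then show ?case by (intro ind_rule[OF mono_un, where ws = "[]"]) (simp_all add: Rl_un_def)
next
  case (FPred s u)
  then have "ind Rl_qf S (enc_fm (FPred s u))" by (intro qf_complete) simp
  then show ?case by (intro ind_rule[OF mono_un, where ws = "[]"]) (simp_all add: Rl_un_def)
next
  case (FNeg \<phi>)
  then have "ind Rl_qf S (enc_fm (FNeg \<phi>))" by (intro qf_complete) simp
  then show ?case by (intro ind_rule[OF mono_un, where ws = "[]"]) (simp_all add: Rl_un_def)
next
  case (FHalf \<phi>)
  then have "ind Rl_qf S (enc_fm (FHalf \<phi>))" by (intro qf_complete) simp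
  then show ?case by (intro ind_rule[OF mono_un, where ws = "[]"]) (simp_all add: Rl_un_def)
next
  case (FMinus \<phi> \<psi>)
  then have "ind Rl_qf S (enc_fm (FMinus \<phi> \<psi>))" by (intro qf_complete) simp
  then show ?case by (intro ind_rule[OF mono_un, where ws = "[]"]) (simp_all add: Rl_un_def)
qed

lemma un_iff: "ind Rl_un S (enc_fm \<phi>) \<longleftrightarrow> universal \<phi>"
  using un_sound0[rule_format, OF _ refl] un_complete by (intro iffI)

lemma dfn_qf[dfn_intros]: "dfnT a \<Longrightarrow> dfn (\<lambda>S e. ind Rl_qf S (a e))"
  by (rule dfn_ind_app; (unfold Rl_qf_def)?; (intro dfn_intros)?)
lemma dfn_un[dfn_intros]: "dfnT a \<Longrightarrow> dfn (\<lambda>S e. ind Rl_un S (a e))"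
  by (rule dfn_ind_app; (unfold Rl_un_def)?; (intro dfn_intros)?)

definition Rl_dy :: "nat set \<Rightarrow> (nat \<Rightarrow> bool) \<Rightarrow> nat \<Rightarrow> bool" where
  "Rl_dy S X v \<longleftrightarrow>
    v = pe 0 (pe 0 (enc_fm FZero)) \<or>
    (\<exists>k. k \<noteq> 0 \<and> v = pe 0 (pe k (enc_fm FOne))) \<or>
    (\<exists>m k n. k \<le> 2 ^ m \<and> v = pe (Suc m) (pe k (pe 3 n)) \<and> X (pe m (pe k n))) \<or>
    (\<exists>m k n. \<not> k \<le> 2 ^ m \<and> v = pe (Suc m) (pe k (pe 2 (pe 3 n))) \<and> X (pe m (pe (2 ^ Suc m - k) n)))"

lemma mono_dy: "monoR Rl_dy" by (rule monoR_I, unfold Rl_dy_def, intro conj_mono disj_mono ex_mono imp_refl; assumption)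

lemma dy_sound0:
  assumes "ind Rl_dy S v"
  shows "\<forall>m k n. v = pe m (pe k n) \<longrightarrow> n = enc_fm (dyad m k)"
  using assms
proof (rule ind_sound[rotated])
  fix X v
  assume r: "Rl_dy S X v" and ih: "\<And>w. X w \<Longrightarrow> \<forall>m k n. w = pe m (pe k n) \<longrightarrow> n = enc_fm (dyad m k)"
  from r show "\<forall>m k n. v = pe m (pe k n) \<longrightarrow> n = enc_fm (dyad m k)"
    unfolding Rl_dy_def
    apply (elim disjE exE conjE)
    apply force
    apply force
    apply (force dest: ih)
    apply (force dest: ih)
    done
qed

lemma dy_complete: "ind Rl_dy S (pe m (pe k (enc_fm (dyad m k))))"
proof (induct m arbitrary: k)
  case 0
  show ?case
  proof (cases "k = 0")
    case True
    then show ?thesis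
      by (intro ind_rule[OF mono_dy, where ws = "[]"]) (simp_all add: Rl_dy_def)
  next
    case False
    then show ?thesis
      apply (intro ind_rule[OF mono_dy, where ws = "[]"])
       apply (unfold Rl_dy_def)[1]
       apply (rule disjI2, rule disjI1, rule exI[of _ k])
      by simp_all
  qed
next
  case (Suc m)
  show ?case
  proof (cases "k \<le> 2 ^ m")
    case True
    have h: "ind Rl_dy S (pe m (pe k (enc_fm (dyad m k))))" by (rule Suc)
    show ?thesis
      apply (rule ind_rule[OF mono_dy, where ws = "[pe m (pe k (enc_fm (dyad m k)))]"])
       apply (unfold Rl_dy_def)[1]
       apply (rule disjI2, rule disjI2, rule disjI1)
       apply (rule exI[of _ m], rule exI[of _ k], rule exI[of _ "enc_fm (dyad m k)"])
       apply (simp add: True)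
      using h by simp
  next
    case False
    have h: "ind Rl_dy S (pe m (pe (2 ^ Suc m - k) (enc_fm (dyad m (2 ^ Suc m - k)))))" by (rule Suc)
    show ?thesis
      apply (rule ind_rule[OF mono_dy, where ws = "[pe m (pe (2 ^ Suc m - k) (enc_fm (dyad m (2 ^ Suc m - k))))]"])
       apply (unfold Rl_dy_def)[1]
       apply (rule disjI2, rule disjI2, rule disjI2)
       apply (rule exI[of _ m], rule exI[of _ k], rule exI[of _ "enc_fm (dyad m (2 ^ Suc m - k))"])
       apply (simp only: dyad.simps if_not_P[OF False] enc_fm.simps)
       apply (simp add: False)
      using h by simp
  qed
qed

lemma dy_iff: "ind Rl_dy S (pe m (pe k n)) \<longleftrightarrow> n = enc_fm (dyad m k)"
proof
  assume "ind Rl_dy S (pe m (pe k n))"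
  then show "n = enc_fm (dyad m k)" by (rule dy_sound0[rule_format, OF _ refl])
next
  assume "n = enc_fm (dyad m k)"
  then show "ind Rl_dy S (pe m (pe k n))" using dy_complete by simp
qed

lemma dfn_dy[dfn_intros]: "dfnT a \<Longrightarrow> dfn (\<lambda>S e. ind Rl_dy S (a e))"
  by (rule dfn_ind_app; (unfold Rl_dy_def)?; (intro dfn_intros)?)

abbreviation vcode :: "nat list \<Rightarrow> nat" where "vcode xs \<equiv> lcode (map TVar xs)"

definition Rl_vl :: "nat set \<Rightarrow> (nat \<Rightarrow> bool) \<Rightarrow> nat \<Rightarrow> bool" where
  "Rl_vl S X v \<longleftrightarrow> v = pe 0 0 \<or> (\<exists>x r k. v = pe (Suc (pe (pe 0 x) r)) (Suc k) \<and> X (pe r k))"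

lemma mono_vl: "monoR Rl_vl" by (rule monoR_I, unfold Rl_vl_def, intro conj_mono disj_mono ex_mono imp_refl; assumption)

lemma vl_sound0:
  assumes "ind Rl_vl S v"
  shows "\<forall>l k. v = pe l k \<longrightarrow> (\<exists>xs. l = vcode xs \<and> length xs = k)"
  using assms
proof (rule ind_sound[rotated])
  fix X v
  assume r: "Rl_vl S X v" and ih: "\<And>w. X w \<Longrightarrow> \<forall>l k. w = pe l k \<longrightarrow> (\<exists>xs. l = vcode xs \<and> length xs = k)"
  from r show "\<forall>l k. v = pe l k \<longrightarrow> (\<exists>xs. l = vcode xs \<and> length xs = k)"
    unfolding Rl_vl_def
  proof (elim disjE exE conjE)
    assume "v = pe 0 0" then show ?thesis by (auto intro!: exI[of _ "[]"])
  next
    fix x r k assume v: "v = pe (Suc (pe (pe 0 x) r)) (Suc k)" and "X (pe r k)"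
    then obtain xs where "r = vcode xs" "length xs = k" using ih by blast
    then show ?thesis using v by (auto intro!: exI[of _ "x # xs"])
  qed
qed

lemma vl_complete: "ind Rl_vl S (pe (vcode xs) (length xs))"
proof (induct xs)
  case Nil
  then show ?case
    by (intro ind_rule[OF mono_vl, where ws = "[]"]) (auto simp: Rl_vl_def)
next
  case (Cons x xs)
  then show ?case
    apply (intro ind_rule[OF mono_vl, where ws = "[pe (vcode xs) (length xs)]"])
     apply (unfold Rl_vl_def)[1]
    by auto
qed

definition Rl_vu :: "nat set \<Rightarrow> (nat \<Rightarrow> bool) \<Rightarrow> nat \<Rightarrow> bool" where
  "Rl_vu S X v \<longleftrightarrow>
    (\<exists>r z w k. v = pe (Suc (pe (pe 0 z) r)) (pe (Suc (pe (pe 0 w) r)) (pe 0 (pe z (pe w (Suc k))))) \<and> ind Rl_vl S (pe r k)) \<or>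
    (\<exists>x r r' i z w k. v = pe (Suc (pe (pe 0 x) r)) (pe (Suc (pe (pe 0 x) r')) (pe (Suc i) (pe z (pe w (Suc k))))) \<and>
        X (pe r (pe r' (pe i (pe z (pe w k))))))"

lemma mono_vu: "monoR Rl_vu" by (rule monoR_I, unfold Rl_vu_def, intro conj_mono disj_mono ex_mono imp_refl; assumption)

lemma vu_sound0:
  assumes "ind Rl_vu S v"
  shows "\<forall>l l' i z w k. v = pe l (pe l' (pe i (pe z (pe w k)))) \<longrightarrow>
     (\<exists>xs. length xs = k \<and> i < k \<and> l = vcode (xs[i := z]) \<and> l' = vcode (xs[i := w]))"
  using assms
proof (rule ind_sound[rotated])
  fix X v
  assume r: "Rl_vu S X v" and ih: "\<And>v. X v \<Longrightarrow> \<forall>l l' i z w k. v = pe l (pe l' (pe i (pe z (pe w k)))) \<longrightarrow>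
     (\<exists>xs. length xs = k \<and> i < k \<and> l = vcode (xs[i := z]) \<and> l' = vcode (xs[i := w]))"
  from r show "\<forall>l l' i z w k. v = pe l (pe l' (pe i (pe z (pe w k)))) \<longrightarrow>
     (\<exists>xs. length xs = k \<and> i < k \<and> l = vcode (xs[i := z]) \<and> l' = vcode (xs[i := w]))"
    unfolding Rl_vu_def
  proof (elim disjE exE conjE)
    fix r z w k
    assume v: "v = pe (Suc (pe (pe 0 z) r)) (pe (Suc (pe (pe 0 w) r)) (pe 0 (pe z (pe w (Suc k)))))"
      and "ind Rl_vl S (pe r k)"
    then obtain xs where "r = vcode xs" "length xs = k" using vl_sound0 by blast
    then show ?thesis using v by (auto intro!: exI[of _ "z # xs"])
  next
    fix x r r' i z w k
    assume v: "v = pe (Suc (pe (pe 0 x) r)) (pe (Suc (pe (pe 0 x) r')) (pe (Suc i) (pe z (pe w (Suc k)))))"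
      and "X (pe r (pe r' (pe i (pe z (pe w k)))))"
    then obtain xs where "length xs = k" "i < k" "r = vcode (xs[i := z])" "r' = vcode (xs[i := w])"
      using ih by blast
    then show ?thesis using v by (auto intro!: exI[of _ "x # xs"])
  qed
qed

lemma vu_complete: "i < length xs \<Longrightarrow> ind Rl_vu S (pe (vcode (xs[i := z])) (pe (vcode (xs[i := w])) (pe i (pe z (pe w (length xs))))))"
proof (induct xs arbitrary: i)
  case Nil
  then show ?case by simp
next
  case (Cons x xs)
  show ?case
  proof (cases i)
    case 0
    then show ?thesis using vl_complete[of S xs]
      apply (intro ind_rule[OF mono_vu, where ws = "[]"])
       apply (unfold Rl_vu_def)[1]
      by auto
  next
    case (Suc j)
    then show ?thesis using Cons(1)[of j] Cons(2)
      apply (intro ind_rule[OF mono_vu, where ws = "[pe (vcode (xs[j := z])) (pe (vcode (xs[j := w])) (pe j (pe z (pe w (length xs)))))]"])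
       apply (unfold Rl_vu_def)[1]
      by auto
  qed
qed

lemma vu_iff: "ind Rl_vu S (pe l (pe l' (pe i (pe z (pe w k))))) \<longleftrightarrow>
     (\<exists>xs. length xs = k \<and> i < k \<and> l = vcode (xs[i := z]) \<and> l' = vcode (xs[i := w]))"
proof
  assume "ind Rl_vu S (pe l (pe l' (pe i (pe z (pe w k)))))"
  then show "\<exists>xs. length xs = k \<and> i < k \<and> l = vcode (xs[i := z]) \<and> l' = vcode (xs[i := w])"
    by (rule vu_sound0[rule_format, OF _ refl])
next
  assume "\<exists>xs. length xs = k \<and> i < k \<and> l = vcode (xs[i := z]) \<and> l' = vcode (xs[i := w])"
  then obtain xs where "length xs = k" "i < k" "l = vcode (xs[i := z])" "l' = vcode (xs[i := w])" by blast
  then show "ind Rl_vu S (pe l (pe l' (pe i (pe z (pe w k)))))" using vu_complete[of i xs S z w] by simp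
qed

lemma dfn_vl[dfn_intros]: "dfnT a \<Longrightarrow> dfn (\<lambda>S e. ind Rl_vl S (a e))"
  by (rule dfn_ind_app; (unfold Rl_vl_def)?; (intro dfn_intros)?)
lemma dfn_vu[dfn_intros]: "dfnT a \<Longrightarrow> dfn (\<lambda>S e. ind Rl_vu S (a e))"
  by (rule dfn_ind_app; (unfold Rl_vu_def)?; (intro dfn_intros)?)


lemma delta0_fo: "delta0 \<phi> \<Longrightarrow> first_order \<phi>"
  by (induct rule: delta0.induct) auto

lemma sigma1_fo: "sigma1 \<phi> \<Longrightarrow> first_order \<phi>"
  by (induct rule: sigma1.induct) (auto simp: delta0_fo)

lemma dfn_fo_set:
  assumes "first_order \<phi>" "\<forall>n. n \<in> A \<longleftrightarrow> aholds {} (\<lambda>_. n) \<phi>" "dfnT a"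
  shows "dfn (\<lambda>S e. a e \<in> A)"
proof -
  have "dfn (\<lambda>S e. e 0 \<in> A)"
    using dfn_aform[OF assms(1)] by (rule dfn_cong) (simp add: assms(2))
  then show ?thesis by (rule dfn_app1[OF _ assms(3)])
qed

lemma dfn_ce: "ce_set A \<Longrightarrow> dfnT a \<Longrightarrow> dfn (\<lambda>S e. a e \<in> A)"
  unfolding ce_set_def using dfn_fo_set sigma1_fo by blast

lemma dfn_arith: "arithmetical_set A \<Longrightarrow> dfnT a \<Longrightarrow> dfn (\<lambda>S e. a e \<in> A)"
  unfolding arithmetical_set_def using dfn_fo_set by blast

definition FAs :: "lang \<Rightarrow> nat set" where
  "FAs L = {prod_encode (f, farity L f) | f. f \<in> fsyms L}"
definition PAs :: "lang \<Rightarrow> nat set" where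
  "PAs L = {prod_encode (P, parity L P) | P. P \<in> psyms L}"
definition FMs :: "lang \<Rightarrow> nat set" where
  "FMs L = {prod_encode (f, prod_encode (i, prod_encode (prod_encode (k, m), prod_encode (k', m'))))
             | f i k m k' m'. f \<in> fsyms L \<and> i < farity L f \<and> 0 < k' \<and> k' \<le> 2 ^ m' \<and>
                 dval k m < fmod L f i (dval k' m')}"
definition PMs :: "lang \<Rightarrow> nat set" where
  "PMs L = {prod_encode (P, prod_encode (i, prod_encode (prod_encode (k, m), prod_encode (k', m'))))
             | P i k m k' m'. P \<in> psyms L \<and> i < parity L P \<and> 0 < k' \<and> k' \<le> 2 ^ m' \<and>
                 dval k m < pmod L P i (dval k' m')}"

lemma FAs_iff: "pe f k \<in> FAs L \<longleftrightarrow> f \<in> fsyms L \<and> k = farity L f"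
  unfolding FAs_def by auto
lemma PAs_iff: "pe f k \<in> PAs L \<longleftrightarrow> f \<in> psyms L \<and> k = parity L f"
  unfolding PAs_def by auto
lemma FMs_iff: "pe f (pe i (pe (pe k m) (pe k' m'))) \<in> FMs L \<longleftrightarrow>
  f \<in> fsyms L \<and> i < farity L f \<and> 0 < k' \<and> k' \<le> 2 ^ m' \<and> dval k m < fmod L f i (dval k' m')"
  unfolding FMs_def by auto
lemma PMs_iff: "pe f (pe i (pe (pe k m) (pe k' m'))) \<in> PMs L \<longleftrightarrow>
  f \<in> psyms L \<and> i < parity L f \<and> 0 < k' \<and> k' \<le> 2 ^ m' \<and> dval k m < pmod L f i (dval k' m')"
  unfolding PMs_def by auto

context
  fixes L :: lang
  assumes CL: "computable_lang L"
begin

lemma dfn_FAs[dfn_intros]: "dfnT a \<Longrightarrow> dfn (\<lambda>S e. a e \<in> FAs L)"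
  using CL unfolding computable_lang_def computable_set_def FAs_def by (blast intro: dfn_ce)
lemma dfn_PAs[dfn_intros]: "dfnT a \<Longrightarrow> dfn (\<lambda>S e. a e \<in> PAs L)"
  using CL unfolding computable_lang_def computable_set_def PAs_def by (blast intro: dfn_ce)
lemma dfn_FMs[dfn_intros]: "dfnT a \<Longrightarrow> dfn (\<lambda>S e. a e \<in> FMs L)"
  using CL unfolding computable_lang_def FMs_def by (blast intro: dfn_ce)
lemma dfn_PMs[dfn_intros]: "dfnT a \<Longrightarrow> dfn (\<lambda>S e. a e \<in> PMs L)"
  using CL unfolding computable_lang_def PMs_def by (blast intro: dfn_ce)

end

definition Rl_wft :: "lang \<Rightarrow> bool \<Rightarrow> nat set \<Rightarrow> (nat \<Rightarrow> bool) \<Rightarrow> nat \<Rightarrow> bool" where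
  "Rl_wft L b S X v \<longleftrightarrow>
    (\<exists>x. v = pe 0 (pe 0 x)) \<or> (b \<and> (\<exists>c. v = pe 0 (pe 2 c))) \<or>
    (\<exists>f l k. v = pe 0 (pe 1 (pe f l)) \<and> pe f k \<in> FAs L \<and> X (pe 1 (pe l k))) \<or>
    v = pe 1 (pe 0 0) \<or>
    (\<exists>a l k. v = pe 1 (pe (Suc (pe a l)) (Suc k)) \<and> X (pe 0 a) \<and> X (pe 1 (pe l k)))"

lemma mono_wft: "monoR (Rl_wft L b)"
  by (rule monoR_I, unfold Rl_wft_def, intro conj_mono disj_mono ex_mono imp_refl; assumption)

definition WfT :: "lang \<Rightarrow> bool \<Rightarrow> nat set \<Rightarrow> nat \<Rightarrow> bool" where
  "WfT L b S n \<longleftrightarrow> ind (Rl_wft L b) S (pe 0 n)"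
definition WfTL :: "lang \<Rightarrow> bool \<Rightarrow> nat set \<Rightarrow> nat \<Rightarrow> nat \<Rightarrow> bool" where
  "WfTL L b S l k \<longleftrightarrow> ind (Rl_wft L b) S (pe 1 (pe l k))"

lemma wft_sound0:
  assumes "ind (Rl_wft L b) S v"
  shows "(\<forall>n. v = pe 0 n \<longrightarrow> (\<exists>t. n = enc_trm t \<and> wf_trm L b t)) \<and>
         (\<forall>l k. v = pe 1 (pe l k) \<longrightarrow> (\<exists>ts. l = lcode ts \<and> length ts = k \<and> (\<forall>t\<in>set ts. wf_trm L b t)))"
  using assms
proof (rule ind_sound[rotated])
  fix X v
  assume r: "Rl_wft L b S X v" and ih: "\<And>w. X w \<Longrightarrow> (\<forall>n. w = pe 0 n \<longrightarrow> (\<exists>t. n = enc_trm t \<and> wf_trm L b t)) \<and>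
         (\<forall>l k. w = pe 1 (pe l k) \<longrightarrow> (\<exists>ts. l = lcode ts \<and> length ts = k \<and> (\<forall>t\<in>set ts. wf_trm L b t)))"
  from r show "(\<forall>n. v = pe 0 n \<longrightarrow> (\<exists>t. n = enc_trm t \<and> wf_trm L b t)) \<and>
         (\<forall>l k. v = pe 1 (pe l k) \<longrightarrow> (\<exists>ts. l = lcode ts \<and> length ts = k \<and> (\<forall>t\<in>set ts. wf_trm L b t)))"
    unfolding Rl_wft_def
  proof (elim disjE exE conjE)
    fix x assume "v = pe 0 (pe 0 x)"
    then show ?thesis by (auto intro!: exI[of _ "TVar x"])
  next
    fix c assume "b" "v = pe 0 (pe 2 c)"
    then show ?thesis by (auto intro!: exI[of _ "TCst c"])
  next
    fix f l k assume v: "v = pe 0 (pe 1 (pe f l))" and fa: "pe f k \<in> FAs L" and x: "X (pe 1 (pe l k))"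
    obtain ts where ts: "l = lcode ts" "length ts = k" "\<forall>t\<in>set ts. wf_trm L b t"
      using ih[OF x] by blast
    show ?thesis using v fa ts by (auto simp: FAs_iff intro!: exI[of _ "TFn f ts"])
  next
    assume "v = pe 1 (pe 0 0)"
    then show ?thesis by (auto intro!: exI[of _ "[]"])
  next
    fix a l k assume v: "v = pe 1 (pe (Suc (pe a l)) (Suc k))" and x1: "X (pe 0 a)" and x2: "X (pe 1 (pe l k))"
    obtain t where t: "a = enc_trm t" "wf_trm L b t" using ih[OF x1] by blast
    obtain ts where ts: "l = lcode ts" "length ts = k" "\<forall>t\<in>set ts. wf_trm L b t"
      using ih[OF x2] by blast
    show ?thesis using v t ts by (auto intro!: exI[of _ "t # ts"])
  qed
qed

lemma wft_complete: "wf_trm L b t \<Longrightarrow> WfT L b S (enc_trm t)"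
  unfolding WfT_def
proof (induct t)
  case (TVar x)
  then show ?case
    by (intro ind_rule[OF mono_wft, where ws = "[]"]) (simp_all add: Rl_wft_def)
next
  case (TCst c)
  then show ?case
    by (intro ind_rule[OF mono_wft, where ws = "[]"]) (simp_all add: Rl_wft_def)
next
  case (TFn f ts)
  have "\<And>us. set us \<subseteq> set ts \<Longrightarrow> ind (Rl_wft L b) S (pe 1 (pe (lcode us) (length us)))"
  proof -
    fix us show "set us \<subseteq> set ts \<Longrightarrow> ind (Rl_wft L b) S (pe 1 (pe (lcode us) (length us)))"
    proof (induct us)
      case Nil
      then show ?case
        by (intro ind_rule[OF mono_wft, where ws = "[]"]) (simp_all add: Rl_wft_def)
    next
      case (Cons u us)
      then have h1: "ind (Rl_wft L b) S (pe 0 (enc_trm u))" and h2: "ind (Rl_wft L b) S (pe 1 (pe (lcode us) (length us)))"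
        using TFn by auto
      show ?case
        apply (rule ind_rule[OF mono_wft, where ws = "[pe 0 (enc_trm u), pe 1 (pe (lcode us) (length us))]"])
         apply (unfold Rl_wft_def)[1]
         apply (rule disjI2, rule disjI2, rule disjI2, rule disjI2)
         apply (rule exI[of _ "enc_trm u"], rule exI[of _ "lcode us"], rule exI[of _ "length us"])
         apply simp
        using h1 h2 by simp
    qed
  qed
  then have h: "ind (Rl_wft L b) S (pe 1 (pe (lcode ts) (length ts)))" by simp
  show ?case
    apply (rule ind_rule[OF mono_wft, where ws = "[pe 1 (pe (lcode ts) (length ts))]"])
     apply (unfold Rl_wft_def)[1]
     apply (rule disjI2, rule disjI2, rule disjI1)
     apply (rule exI[of _ f], rule exI[of _ "lcode ts"], rule exI[of _ "length ts"])
    using TFn(2) apply (simp add: FAs_iff)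
    using h by simp
qed

lemma wftl_complete: "\<forall>t\<in>set ts. wf_trm L b t \<Longrightarrow> WfTL L b S (lcode ts) (length ts)"
  unfolding WfTL_def
proof (induct ts)
  case Nil
  then show ?case
    by (intro ind_rule[OF mono_wft, where ws = "[]"]) (simp_all add: Rl_wft_def)
next
  case (Cons u us)
  then have h1: "ind (Rl_wft L b) S (pe 0 (enc_trm u))" and h2: "ind (Rl_wft L b) S (pe 1 (pe (lcode us) (length us)))"
    using wft_complete unfolding WfT_def by auto
  show ?case
    apply (rule ind_rule[OF mono_wft, where ws = "[pe 0 (enc_trm u), pe 1 (pe (lcode us) (length us))]"])
     apply (unfold Rl_wft_def)[1]
     apply (rule disjI2, rule disjI2, rule disjI2, rule disjI2)
     apply (rule exI[of _ "enc_trm u"], rule exI[of _ "lcode us"], rule exI[of _ "length us"])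
     apply simp
    using h1 h2 by simp
qed

lemma wft_iff: "WfT L b S n \<longleftrightarrow> (\<exists>t. n = enc_trm t \<and> wf_trm L b t)"
  using wft_sound0[THEN conjunct1, rule_format, OF _ refl] wft_complete unfolding WfT_def by blast

lemma wftl_iff: "WfTL L b S l k \<longleftrightarrow> (\<exists>ts. l = lcode ts \<and> length ts = k \<and> (\<forall>t\<in>set ts. wf_trm L b t))"
  using wft_sound0[THEN conjunct2, rule_format, OF _ refl] wftl_complete unfolding WfTL_def by blast

lemma dfn_WfT[dfn_intros]: "computable_lang L \<Longrightarrow> dfnT a \<Longrightarrow> dfn (\<lambda>S e. WfT L b S (a e))"
  unfolding WfT_def by (rule dfn_ind_app; (unfold Rl_wft_def)?; (intro dfn_intros)?)
lemma dfn_WfTL[dfn_intros]: "computable_lang L \<Longrightarrow> dfnT a \<Longrightarrow> dfnT c \<Longrightarrow> dfn (\<lambda>S e. WfTL L b S (a e) (c e))"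
  unfolding WfTL_def by (rule dfn_ind_app; (unfold Rl_wft_def)?; (intro dfn_intros)?)

section \<open>Well-formed formulas\<close>

definition Rl_wff :: "lang \<Rightarrow> bool \<Rightarrow> nat set \<Rightarrow> (nat \<Rightarrow> bool) \<Rightarrow> nat \<Rightarrow> bool" where
  "Rl_wff L b S X v \<longleftrightarrow>
    (\<exists>s u. v = pe 0 (pe s u) \<and> WfT L b S s \<and> WfT L b S u) \<or>
    (\<exists>P l k. v = pe 1 (pe P l) \<and> pe P k \<in> PAs L \<and> WfTL L b S l k) \<or>
    (\<exists>p. v = pe 2 p \<and> X p) \<or> (\<exists>p. v = pe 3 p \<and> X p) \<or>
    (\<exists>p q. v = pe 4 (pe p q) \<and> X p \<and> X q) \<or> (\<exists>x p. v = pe 5 (pe x p) \<and> X p)"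

lemma mono_wff: "monoR (Rl_wff L b)"
  by (rule monoR_I, unfold Rl_wff_def, intro conj_mono disj_mono ex_mono imp_refl; assumption)

lemma wff_sound0:
  assumes "ind (Rl_wff L b) S v"
  shows "\<exists>\<phi>. v = enc_fm \<phi> \<and> wf_fm L b \<phi>"
  using assms
proof (rule ind_sound[rotated])
  fix X v
  assume r: "Rl_wff L b S X v" and ih: "\<And>w. X w \<Longrightarrow> \<exists>\<phi>. w = enc_fm \<phi> \<and> wf_fm L b \<phi>"
  from r show "\<exists>\<phi>. v = enc_fm \<phi> \<and> wf_fm L b \<phi>"
    unfolding Rl_wff_def
  proof (elim disjE exE conjE)
    fix s u assume v: "v = pe 0 (pe s u)" and "WfT L b S s" "WfT L b S u"
    then obtain t1 t2 where "s = enc_trm t1" "wf_trm L b t1" "u = enc_trm t2" "wf_trm L b t2"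
      unfolding wft_iff by blast
    then show ?thesis using v by (auto intro!: exI[of _ "FDist t1 t2"])
  next
    fix P l k assume v: "v = pe 1 (pe P l)" and "pe P k \<in> PAs L" "WfTL L b S l k"
    then obtain ts where "l = lcode ts" "length ts = k" "\<forall>t\<in>set ts. wf_trm L b t" "P \<in> psyms L" "k = parity L P"
      unfolding wftl_iff PAs_iff by blast
    then show ?thesis using v by (auto intro!: exI[of _ "FPred P ts"])
  next
    fix p assume v: "v = pe 2 p" and "X p"
    then obtain \<phi> where "p = enc_fm \<phi>" "wf_fm L b \<phi>" using ih by blast
    then show ?thesis by (intro exI[of _ "FNeg \<phi>"] conjI) (simp only: v enc_fm.simps, simp)
  next
    fix p assume v: "v = pe 3 p" and "X p"
    then obtain \<phi> where "p = enc_fm \<phi>" "wf_fm L b \<phi>" using ih by blast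
    then show ?thesis by (intro exI[of _ "FHalf \<phi>"] conjI) (simp only: v enc_fm.simps, simp)
  next
    fix p q assume v: "v = pe 4 (pe p q)" and "X p" "X q"
    then obtain \<phi> \<psi> where "p = enc_fm \<phi>" "wf_fm L b \<phi>" "q = enc_fm \<psi>" "wf_fm L b \<psi>" using ih by blast
    then show ?thesis by (intro exI[of _ "FMinus \<phi> \<psi>"] conjI) (simp only: v enc_fm.simps, simp)
  next
    fix x p assume v: "v = pe 5 (pe x p)" and "X p"
    then obtain \<phi> where "p = enc_fm \<phi>" "wf_fm L b \<phi>" using ih by blast
    then show ?thesis by (intro exI[of _ "FSup x \<phi>"] conjI) (simp only: v enc_fm.simps, simp)
  qed
qed

lemma wff_complete: "wf_fm L b \<phi> \<Longrightarrow> ind (Rl_wff L b) S (enc_fm \<phi>)"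
proof (induct \<phi>)
  case (FDist s u)
  then have "WfT L b S (enc_trm s)" "WfT L b S (enc_trm u)" by (auto intro: wft_complete)
  then show ?case
    apply (intro ind_rule[OF mono_wff, where ws = "[]"])
     apply (unfold Rl_wff_def)[1]
     apply (rule disjI1, rule exI[of _ "enc_trm s"], rule exI[of _ "enc_trm u"])
    by simp_all
next
  case (FPred P ts)
  then have "WfTL L b S (lcode ts) (length ts)" by (intro wftl_complete) simp
  then show ?case using FPred
    apply (intro ind_rule[OF mono_wff, where ws = "[]"])
     apply (unfold Rl_wff_def)[1]
     apply (rule disjI2, rule disjI1, rule exI[of _ P], rule exI[of _ "lcode ts"], rule exI[of _ "length ts"])
    by (simp_all add: PAs_iff)
next
  case (FNeg \<phi>)
  then show ?case
    apply (intro ind_rule[OF mono_wff, where ws = "[enc_fm \<phi>]"])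
     apply (unfold Rl_wff_def)[1]
    by auto
next
  case (FHalf \<phi>)
  then show ?case
    apply (intro ind_rule[OF mono_wff, where ws = "[enc_fm \<phi>]"])
     apply (unfold Rl_wff_def)[1]
    by auto
next
  case (FMinus \<phi> \<psi>)
  then show ?case
    apply (intro ind_rule[OF mono_wff, where ws = "[enc_fm \<phi>, enc_fm \<psi>]"])
     apply (unfold Rl_wff_def)[1]
    by auto
next
  case (FSup x \<phi>)
  then show ?case
    apply (intro ind_rule[OF mono_wff, where ws = "[enc_fm \<phi>]"])
     apply (unfold Rl_wff_def)[1]
    by auto
qed

lemma wff_iff: "ind (Rl_wff L b) S n \<longleftrightarrow> (\<exists>\<phi>. n = enc_fm \<phi> \<and> wf_fm L b \<phi>)"
proof
  assume "ind (Rl_wff L b) S n" then show "\<exists>\<phi>. n = enc_fm \<phi> \<and> wf_fm L b \<phi>" by (rule wff_sound0)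
next
  assume "\<exists>\<phi>. n = enc_fm \<phi> \<and> wf_fm L b \<phi>"
  then obtain \<phi> where "n = enc_fm \<phi>" "wf_fm L b \<phi>" by blast
  then show "ind (Rl_wff L b) S n" using wff_complete by simp
qed

lemma dfn_wff[dfn_intros]: "computable_lang L \<Longrightarrow> dfnT a \<Longrightarrow> dfn (\<lambda>S e. ind (Rl_wff L b) S (a e))"
  by (rule dfn_ind_app; (unfold Rl_wff_def)?; (intro dfn_intros)?)


abbreviation cM :: "nat \<Rightarrow> nat \<Rightarrow> nat" where "cM p q \<equiv> pe 4 (pe p q)"
abbreviation cN :: "nat \<Rightarrow> nat" where "cN p \<equiv> pe 2 p"
abbreviation cH :: "nat \<Rightarrow> nat" where "cH p \<equiv> pe 3 p"
abbreviation cS :: "nat \<Rightarrow> nat \<Rightarrow> nat" where "cS x p \<equiv> pe 5 (pe x p)"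
abbreviation cD :: "nat \<Rightarrow> nat \<Rightarrow> nat" where "cD a c \<equiv> pe 0 (pe a c)"
abbreviation cV :: "nat \<Rightarrow> nat" where "cV x \<equiv> pe 0 x"
abbreviation cF :: "nat \<Rightarrow> nat \<Rightarrow> nat" where "cF f l \<equiv> pe 1 (pe f l)"
abbreviation WF :: "lang \<Rightarrow> bool \<Rightarrow> nat set \<Rightarrow> nat \<Rightarrow> bool" where "WF L b S p \<equiv> ind (Rl_wff L b) S p"

lemma dfn_odd0: "dfn (\<lambda>S e. odd (e 0))"
proof -
  have "dfn (\<lambda>S e. \<exists>j. e 0 = 2 * j + 1)" by (intro dfn_intros)
  then show ?thesis by (rule dfn_cong) (auto elim: oddE)
qed

lemma dfn_odd[dfn_intros]: "dfnT a \<Longrightarrow> dfn (\<lambda>S e. odd (a e))"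
  using dfn_app1[where R = "\<lambda>S x. odd x", OF dfn_odd0] by simp

definition "DH L b H S v \<longleftrightarrow> H S v \<and> WF L b S v"
definition "DA1 L b S v \<longleftrightarrow> (\<exists>p q. WF L b S p \<and> WF L b S q \<and> v = cM (cM p q) p)"
definition "DA2 L b S v \<longleftrightarrow> (\<exists>p q r. WF L b S p \<and> WF L b S q \<and> WF L b S r \<and> v = cM (cM (cM r p) (cM r q)) (cM q p))"
definition "DA3 L b S v \<longleftrightarrow> (\<exists>p q. WF L b S p \<and> WF L b S q \<and> v = cM (cM p (cM p q)) (cM q (cM q p)))"
definition "DA4 L b S v \<longleftrightarrow> (\<exists>p q. WF L b S p \<and> WF L b S q \<and> v = cM (cM (cN p) (cN q)) (cM q p))"
definition "DA5 L b S v \<longleftrightarrow> (\<exists>p. WF L b S p \<and> v = cM (cH p) (cM p (cH p)))"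
definition "DA6 L b S v \<longleftrightarrow> (\<exists>p. WF L b S p \<and> v = cM (cM p (cH p)) (cH p))"
definition "DA7 L b S v \<longleftrightarrow> (\<exists>p q x. WF L b S p \<and> WF L b S q \<and> v = cM (cM (cS x q) (cS x p)) (cS x (cM q p)))"
definition "DA8 L b S v \<longleftrightarrow> (\<exists>p t x s. WF L b S p \<and> WfT L b S t \<and> FF S x t p \<and> SbF S x t p s \<and> v = cM s (cS x p))"
definition "DA9 L b S v \<longleftrightarrow> (\<exists>p x. WF L b S p \<and> \<not> FvF S p x \<and> v = cM (cS x p) p)"
definition "DA10 v \<longleftrightarrow> (\<exists>x. v = cD (cV x) (cV x))"
definition "DA11 v \<longleftrightarrow> (\<exists>x y. v = cM (cD (cV x) (cV y)) (cD (cV y) (cV x)))"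
definition "DA12 v \<longleftrightarrow> (\<exists>x y z. v = cM (cM (cD (cV x) (cV z)) (cD (cV x) (cV y))) (cD (cV y) (cV z)))"
definition "DA13 L S v \<longleftrightarrow> (\<exists>f l l' i z w k kr mr ke me de dr. pe f k \<in> FAs L \<and>
   ind Rl_vu S (pe l (pe l' (pe i (pe z (pe w k))))) \<and> canon_dyadic kr mr \<and> canon_dyadic ke me \<and>
   0 < kr \<and> 0 < ke \<and> pe f (pe i (pe (pe kr mr) (pe ke me))) \<in> FMs L \<and>
   ind Rl_dy S (pe me (pe ke de)) \<and> ind Rl_dy S (pe mr (pe kr dr)) \<and>
   v = cM (cM (cD (cF f l) (cF f l')) de) (cM (cM (cD (cF f l) (cF f l')) de) (cM dr (cD (cV z) (cV w)))))"
definition "DA14 L S v \<longleftrightarrow> (\<exists>f l l' i z w k kr mr ke me de dr. pe f k \<in> PAs L \<and>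
   ind Rl_vu S (pe l (pe l' (pe i (pe z (pe w k))))) \<and> canon_dyadic kr mr \<and> canon_dyadic ke me \<and>
   0 < kr \<and> 0 < ke \<and> pe f (pe i (pe (pe kr mr) (pe ke me))) \<in> PMs L \<and>
   ind Rl_dy S (pe me (pe ke de)) \<and> ind Rl_dy S (pe mr (pe kr dr)) \<and>
   v = cM (cM (cM (cF f l) (cF f l')) de) (cM (cM (cM (cF f l) (cF f l')) de) (cM dr (cD (cV z) (cV w)))))"
definition "DMP (X :: nat \<Rightarrow> bool) v \<longleftrightarrow> (\<exists>p. X p \<and> X (cM v p))"
definition "DGen (X :: nat \<Rightarrow> bool) v \<longleftrightarrow> (\<exists>x p. X p \<and> v = cS x p)"

definition Rl_der :: "lang \<Rightarrow> bool \<Rightarrow> (nat set \<Rightarrow> nat \<Rightarrow> bool) \<Rightarrow> nat set \<Rightarrow> (nat \<Rightarrow> bool) \<Rightarrow> nat \<Rightarrow> bool" where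
  "Rl_der L b H S X v \<longleftrightarrow> DH L b H S v \<or> DA1 L b S v \<or> DA2 L b S v \<or> DA3 L b S v \<or> DA4 L b S v \<or>
     DA5 L b S v \<or> DA6 L b S v \<or> DA7 L b S v \<or> DA8 L b S v \<or> DA9 L b S v \<or> DA10 v \<or> DA11 v \<or>
     DA12 v \<or> DA13 L S v \<or> DA14 L S v \<or> DMP X v \<or> DGen X v"

lemma mono_der: "monoR (Rl_der L b H)"
  by (rule monoR_I, unfold Rl_der_def DMP_def DGen_def, intro conj_mono disj_mono ex_mono imp_refl; assumption)

lemma dfn_der[dfn_intros]:
  assumes "computable_lang L" "\<And>a. dfnT a \<Longrightarrow> dfn (\<lambda>S e. H S (a e))" "dfnT a"
  shows "dfn (\<lambda>S e. ind (Rl_der L b H) S (a e))"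
  apply (rule dfn_ind_app[OF _ assms(3)])
  unfolding Rl_der_def DH_def DA1_def DA2_def DA3_def DA4_def DA5_def DA6_def DA7_def DA8_def DA9_def
    DA10_def DA11_def DA12_def DA13_def DA14_def DMP_def DGen_def canon_dyadic_def
  by (intro dfn_intros assms(1,2))

lemma WF_E: "WF L b S p \<Longrightarrow> (\<And>\<phi>. p = enc_fm \<phi> \<Longrightarrow> wf_fm L b \<phi> \<Longrightarrow> P) \<Longrightarrow> P"
  using wff_iff by blast

lemma snd_A1: assumes "DA1 L b S v" shows "\<exists>\<phi>. v = enc_fm \<phi> \<and> deriv L b \<Gamma> \<phi>"
proof -
  obtain p q where h: "WF L b S p" "WF L b S q" "v = cM (cM p q) p" using assms unfolding DA1_def by blast
  obtain \<phi> where p: "p = enc_fm \<phi>" "wf_fm L b \<phi>" using h(1) by (rule WF_E)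
  obtain \<psi> where q: "q = enc_fm \<psi>" "wf_fm L b \<psi>" using h(2) by (rule WF_E)
  have "v = enc_fm (FMinus (FMinus \<phi> \<psi>) \<phi>)" by (simp only: h(3) p(1) q(1) enc_fm.simps)
  moreover have "deriv L b \<Gamma> (FMinus (FMinus \<phi> \<psi>) \<phi>)" by (rule deriv.A1[OF p(2) q(2)])
  ultimately show ?thesis by blast
qed

lemma snd_A2: assumes "DA2 L b S v" shows "\<exists>\<phi>. v = enc_fm \<phi> \<and> deriv L b \<Gamma> \<phi>"
proof -
  obtain p q r where h: "WF L b S p" "WF L b S q" "WF L b S r" "v = cM (cM (cM r p) (cM r q)) (cM q p)"
    using assms unfolding DA2_def by blast
  obtain \<phi> where p: "p = enc_fm \<phi>" "wf_fm L b \<phi>" using h(1) by (rule WF_E)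
  obtain \<psi> where q: "q = enc_fm \<psi>" "wf_fm L b \<psi>" using h(2) by (rule WF_E)
  obtain \<chi> where r: "r = enc_fm \<chi>" "wf_fm L b \<chi>" using h(3) by (rule WF_E)
  have "v = enc_fm (FMinus (FMinus (FMinus \<chi> \<phi>) (FMinus \<chi> \<psi>)) (FMinus \<psi> \<phi>))"
    by (simp only: h(4) p(1) q(1) r(1) enc_fm.simps)
  moreover have "deriv L b \<Gamma> (FMinus (FMinus (FMinus \<chi> \<phi>) (FMinus \<chi> \<psi>)) (FMinus \<psi> \<phi>))"
    by (rule deriv.A2[OF p(2) q(2) r(2)])
  ultimately show ?thesis by blast
qed

lemma snd_A3: assumes "DA3 L b S v" shows "\<exists>\<phi>. v = enc_fm \<phi> \<and> deriv L b \<Gamma> \<phi>"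
proof -
  obtain p q where h: "WF L b S p" "WF L b S q" "v = cM (cM p (cM p q)) (cM q (cM q p))" using assms unfolding DA3_def by blast
  obtain \<phi> where p: "p = enc_fm \<phi>" "wf_fm L b \<phi>" using h(1) by (rule WF_E)
  obtain \<psi> where q: "q = enc_fm \<psi>" "wf_fm L b \<psi>" using h(2) by (rule WF_E)
  have "v = enc_fm (FMinus (FMinus \<phi> (FMinus \<phi> \<psi>)) (FMinus \<psi> (FMinus \<psi> \<phi>)))" by (simp only: h(3) p(1) q(1) enc_fm.simps)
  moreover have "deriv L b \<Gamma> (FMinus (FMinus \<phi> (FMinus \<phi> \<psi>)) (FMinus \<psi> (FMinus \<psi> \<phi>)))" by (rule deriv.A3[OF p(2) q(2)])
  ultimately show ?thesis by blast
qed

lemma snd_A4: assumes "DA4 L b S v" shows "\<exists>\<phi>. v = enc_fm \<phi> \<and> deriv L b \<Gamma> \<phi>"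
proof -
  obtain p q where h: "WF L b S p" "WF L b S q" "v = cM (cM (cN p) (cN q)) (cM q p)" using assms unfolding DA4_def by blast
  obtain \<phi> where p: "p = enc_fm \<phi>" "wf_fm L b \<phi>" using h(1) by (rule WF_E)
  obtain \<psi> where q: "q = enc_fm \<psi>" "wf_fm L b \<psi>" using h(2) by (rule WF_E)
  have "v = enc_fm (FMinus (FMinus (FNeg \<phi>) (FNeg \<psi>)) (FMinus \<psi> \<phi>))" by (simp only: h(3) p(1) q(1) enc_fm.simps)
  moreover have "deriv L b \<Gamma> (FMinus (FMinus (FNeg \<phi>) (FNeg \<psi>)) (FMinus \<psi> \<phi>))" by (rule deriv.A4[OF p(2) q(2)])
  ultimately show ?thesis by blast
qed

lemma snd_A5: assumes "DA5 L b S v" shows "\<exists>\<phi>. v = enc_fm \<phi> \<and> deriv L b \<Gamma> \<phi>"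
proof -
  obtain p where h: "WF L b S p" "v = cM (cH p) (cM p (cH p))" using assms unfolding DA5_def by blast
  obtain \<phi> where p: "p = enc_fm \<phi>" "wf_fm L b \<phi>" using h(1) by (rule WF_E)
  have "v = enc_fm (FMinus (FHalf \<phi>) (FMinus \<phi> (FHalf \<phi>)))" by (simp only: h(2) p(1) enc_fm.simps)
  moreover have "deriv L b \<Gamma> (FMinus (FHalf \<phi>) (FMinus \<phi> (FHalf \<phi>)))" by (rule deriv.A5[OF p(2)])
  ultimately show ?thesis by blast
qed

lemma snd_A6: assumes "DA6 L b S v" shows "\<exists>\<phi>. v = enc_fm \<phi> \<and> deriv L b \<Gamma> \<phi>"
proof -
  obtain p where h: "WF L b S p" "v = cM (cM p (cH p)) (cH p)" using assms unfolding DA6_def by blast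
  obtain \<phi> where p: "p = enc_fm \<phi>" "wf_fm L b \<phi>" using h(1) by (rule WF_E)
  have "v = enc_fm (FMinus (FMinus \<phi> (FHalf \<phi>)) (FHalf \<phi>))" by (simp only: h(2) p(1) enc_fm.simps)
  moreover have "deriv L b \<Gamma> (FMinus (FMinus \<phi> (FHalf \<phi>)) (FHalf \<phi>))" by (rule deriv.A6[OF p(2)])
  ultimately show ?thesis by blast
qed

lemma snd_A7: assumes "DA7 L b S v" shows "\<exists>\<phi>. v = enc_fm \<phi> \<and> deriv L b \<Gamma> \<phi>"
proof -
  obtain p q x where h: "WF L b S p" "WF L b S q" "v = cM (cM (cS x q) (cS x p)) (cS x (cM q p))"
    using assms unfolding DA7_def by blast
  obtain \<phi> where p: "p = enc_fm \<phi>" "wf_fm L b \<phi>" using h(1) by (rule WF_E)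
  obtain \<psi> where q: "q = enc_fm \<psi>" "wf_fm L b \<psi>" using h(2) by (rule WF_E)
  have "v = enc_fm (FMinus (FMinus (FSup x \<psi>) (FSup x \<phi>)) (FSup x (FMinus \<psi> \<phi>)))" by (simp only: h(3) p(1) q(1) enc_fm.simps)
  moreover have "deriv L b \<Gamma> (FMinus (FMinus (FSup x \<psi>) (FSup x \<phi>)) (FSup x (FMinus \<psi> \<phi>)))" by (rule deriv.A7[OF p(2) q(2)])
  ultimately show ?thesis by blast
qed

lemma snd_A8: assumes "DA8 L b S v" shows "\<exists>\<phi>. v = enc_fm \<phi> \<and> deriv L b \<Gamma> \<phi>"
proof -
  obtain p t x s where h: "WF L b S p" "WfT L b S t" "FF S x t p" "SbF S x t p s" "v = cM s (cS x p)"
    using assms unfolding DA8_def by blast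
  obtain \<phi> where p: "p = enc_fm \<phi>" "wf_fm L b \<phi>" using h(1) by (rule WF_E)
  obtain \<tau> where t: "t = enc_trm \<tau>" "wf_trm L b \<tau>" using h(2) wft_iff by blast
  have ff: "free_for x \<tau> \<phi>" using h(3) by (simp only: t(1) p(1) ff_iff)
  have sb: "s = enc_fm (subst_fm x \<tau> \<phi>)" using h(4) by (simp only: t(1) p(1) sbf_iff)
  have "v = enc_fm (FMinus (subst_fm x \<tau> \<phi>) (FSup x \<phi>))" by (simp only: h(5) sb p(1) enc_fm.simps)
  moreover have "deriv L b \<Gamma> (FMinus (subst_fm x \<tau> \<phi>) (FSup x \<phi>))" by (rule deriv.A8[OF p(2) t(2) ff])
  ultimately show ?thesis by blast
qed

lemma snd_A9: assumes "DA9 L b S v" shows "\<exists>\<phi>. v = enc_fm \<phi> \<and> deriv L b \<Gamma> \<phi>"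
proof -
  obtain p x where h: "WF L b S p" "\<not> FvF S p x" "v = cM (cS x p) p" using assms unfolding DA9_def by blast
  obtain \<phi> where p: "p = enc_fm \<phi>" "wf_fm L b \<phi>" using h(1) by (rule WF_E)
  have nf: "x \<notin> fv_fm \<phi>" using h(2) by (simp only: p(1) fvf_iff not_False_eq_True)
  have "v = enc_fm (FMinus (FSup x \<phi>) \<phi>)" by (simp only: h(3) p(1) enc_fm.simps)
  moreover have "deriv L b \<Gamma> (FMinus (FSup x \<phi>) \<phi>)" by (rule deriv.A9[OF p(2) nf])
  ultimately show ?thesis by blast
qed

lemma snd_A10: assumes "DA10 v" shows "\<exists>\<phi>. v = enc_fm \<phi> \<and> deriv L b \<Gamma> \<phi>"
proof -
  obtain x where h: "v = cD (cV x) (cV x)" using assms unfolding DA10_def by blast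
  have "v = enc_fm (FDist (TVar x) (TVar x))" by (simp only: h enc_fm.simps enc_trm.simps)
  moreover have "deriv L b \<Gamma> (FDist (TVar x) (TVar x))" by (rule deriv.A10)
  ultimately show ?thesis by blast
qed

lemma snd_A11: assumes "DA11 v" shows "\<exists>\<phi>. v = enc_fm \<phi> \<and> deriv L b \<Gamma> \<phi>"
proof -
  obtain x y where h: "v = cM (cD (cV x) (cV y)) (cD (cV y) (cV x))" using assms unfolding DA11_def by blast
  have "v = enc_fm (FMinus (FDist (TVar x) (TVar y)) (FDist (TVar y) (TVar x)))" by (simp only: h enc_fm.simps enc_trm.simps)
  moreover have "deriv L b \<Gamma> (FMinus (FDist (TVar x) (TVar y)) (FDist (TVar y) (TVar x)))" by (rule deriv.A11)
  ultimately show ?thesis by blast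
qed

lemma snd_A12: assumes "DA12 v" shows "\<exists>\<phi>. v = enc_fm \<phi> \<and> deriv L b \<Gamma> \<phi>"
proof -
  obtain x y z where h: "v = cM (cM (cD (cV x) (cV z)) (cD (cV x) (cV y))) (cD (cV y) (cV z))" using assms unfolding DA12_def by blast
  have "v = enc_fm (FMinus (FMinus (FDist (TVar x) (TVar z)) (FDist (TVar x) (TVar y))) (FDist (TVar y) (TVar z)))"
    by (simp only: h enc_fm.simps enc_trm.simps)
  moreover have "deriv L b \<Gamma> (FMinus (FMinus (FDist (TVar x) (TVar z)) (FDist (TVar x) (TVar y))) (FDist (TVar y) (TVar z)))"
    by (rule deriv.A12)
  ultimately show ?thesis by blast
qed

lemma snd_A13: assumes "DA13 L S v" shows "\<exists>\<phi>. v = enc_fm \<phi> \<and> deriv L b \<Gamma> \<phi>"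
proof -
  obtain f l l' i z w k kr mr ke me de dr where h: "pe f k \<in> FAs L"
   "ind Rl_vu S (pe l (pe l' (pe i (pe z (pe w k)))))" "canon_dyadic kr mr" "canon_dyadic ke me"
   "0 < kr" "0 < ke" "pe f (pe i (pe (pe kr mr) (pe ke me))) \<in> FMs L"
   "ind Rl_dy S (pe me (pe ke de))" "ind Rl_dy S (pe mr (pe kr dr))"
   "v = cM (cM (cD (cF f l) (cF f l')) de) (cM (cM (cD (cF f l) (cF f l')) de) (cM dr (cD (cV z) (cV w))))"
    using assms unfolding DA13_def by blast
  obtain xs where xs: "length xs = k" "i < k" "l = vcode (xs[i := z])" "l' = vcode (xs[i := w])"
    using h(2) vu_iff by blast
  have fa: "f \<in> fsyms L" "k = farity L f" using h(1) FAs_iff by blast+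
  have fm: "dval kr mr < fmod L f i (dval ke me)" using h(7) FMs_iff by blast
  have de: "de = enc_fm (dyad me ke)" using h(8) dy_iff by blast
  have dr: "dr = enc_fm (dyad mr kr)" using h(9) dy_iff by blast
  have "v = enc_fm (FMin (FMinus (FDist (TFn f (map TVar (xs[i := z]))) (TFn f (map TVar (xs[i := w])))) (dyad me ke))
                          (FMinus (dyad mr kr) (FDist (TVar z) (TVar w))))"
    by (simp only: h(10) xs(3,4) de dr FMin_def enc_fm.simps enc_trm.simps)
  moreover have "deriv L b \<Gamma> (FMin (FMinus (FDist (TFn f (map TVar (xs[i := z]))) (TFn f (map TVar (xs[i := w])))) (dyad me ke))
                          (FMinus (dyad mr kr) (FDist (TVar z) (TVar w))))"
    by (rule deriv.A13) (use fa xs h(3-6) fm in auto)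
  ultimately show ?thesis by blast
qed

lemma snd_A14: assumes "DA14 L S v" shows "\<exists>\<phi>. v = enc_fm \<phi> \<and> deriv L b \<Gamma> \<phi>"
proof -
  obtain f l l' i z w k kr mr ke me de dr where h: "pe f k \<in> PAs L"
   "ind Rl_vu S (pe l (pe l' (pe i (pe z (pe w k)))))" "canon_dyadic kr mr" "canon_dyadic ke me"
   "0 < kr" "0 < ke" "pe f (pe i (pe (pe kr mr) (pe ke me))) \<in> PMs L"
   "ind Rl_dy S (pe me (pe ke de))" "ind Rl_dy S (pe mr (pe kr dr))"
   "v = cM (cM (cM (cF f l) (cF f l')) de) (cM (cM (cM (cF f l) (cF f l')) de) (cM dr (cD (cV z) (cV w))))"
    using assms unfolding DA14_def by blast
  obtain xs where xs: "length xs = k" "i < k" "l = vcode (xs[i := z])" "l' = vcode (xs[i := w])"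
    using h(2) vu_iff by blast
  have fa: "f \<in> psyms L" "k = parity L f" using h(1) PAs_iff by blast+
  have fm: "dval kr mr < pmod L f i (dval ke me)" using h(7) PMs_iff by blast
  have de: "de = enc_fm (dyad me ke)" using h(8) dy_iff by blast
  have dr: "dr = enc_fm (dyad mr kr)" using h(9) dy_iff by blast
  have "v = enc_fm (FMin (FMinus (FMinus (FPred f (map TVar (xs[i := z]))) (FPred f (map TVar (xs[i := w])))) (dyad me ke))
                          (FMinus (dyad mr kr) (FDist (TVar z) (TVar w))))"
    by (simp only: h(10) xs(3,4) de dr FMin_def enc_fm.simps enc_trm.simps)
  moreover have "deriv L b \<Gamma> (FMin (FMinus (FMinus (FPred f (map TVar (xs[i := z]))) (FPred f (map TVar (xs[i := w])))) (dyad me ke))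
                          (FMinus (dyad mr kr) (FDist (TVar z) (TVar w))))"
    by (rule deriv.A14) (use fa xs h(3-6) fm in auto)
  ultimately show ?thesis by blast
qed

lemma der_sound0:
  assumes "ind (Rl_der L b H) S v"
  shows "\<exists>\<phi>. v = enc_fm \<phi> \<and> deriv L b {\<psi>. H S (enc_fm \<psi>)} \<phi>"
  using assms
proof (rule ind_sound[rotated])
  fix X v
  assume r: "Rl_der L b H S X v" and ih: "\<And>w. X w \<Longrightarrow> \<exists>\<phi>. w = enc_fm \<phi> \<and> deriv L b {\<psi>. H S (enc_fm \<psi>)} \<phi>"
  from r show "\<exists>\<phi>. v = enc_fm \<phi> \<and> deriv L b {\<psi>. H S (enc_fm \<psi>)} \<phi>"
    unfolding Rl_der_def
  proof (elim disjE)
    assume "DH L b H S v"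
    then have h: "H S v" "WF L b S v" unfolding DH_def by auto
    obtain \<phi> where p: "v = enc_fm \<phi>" "wf_fm L b \<phi>" using h(2) by (rule WF_E)
    have "\<phi> \<in> {\<psi>. H S (enc_fm \<psi>)}" using h(1) p(1) by simp
    then show ?thesis using p by (blast intro: deriv.hyp)
  next
    assume "DMP X v"
    then obtain p where x: "X p" "X (cM v p)" unfolding DMP_def by blast
    obtain \<phi> where p: "p = enc_fm \<phi>" "deriv L b {\<psi>. H S (enc_fm \<psi>)} \<phi>" using ih[OF x(1)] by blast
    obtain \<chi> where c: "cM v p = enc_fm \<chi>" "deriv L b {\<psi>. H S (enc_fm \<psi>)} \<chi>" using ih[OF x(2)] by blast
    obtain \<psi> \<phi>' where d: "\<chi> = FMinus \<psi> \<phi>'" "v = enc_fm \<psi>" "p = enc_fm \<phi>'"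
      using c(1) dec_fm(11) by blast
    have "\<phi>' = \<phi>" using d(3) p(1) enc_fm_inj by metis
    then have "deriv L b {\<psi>. H S (enc_fm \<psi>)} \<psi>" using c(2) d(1) p(2) by (blast intro: deriv.MP)
    then show ?thesis using d(2) by blast
  next
    assume "DGen X v"
    then obtain x p where x: "X p" "v = cS x p" unfolding DGen_def by blast
    obtain \<phi> where p: "p = enc_fm \<phi>" "deriv L b {\<psi>. H S (enc_fm \<psi>)} \<phi>" using ih[OF x(1)] by blast
    have "v = enc_fm (FSup x \<phi>)" by (simp only: x(2) p(1) enc_fm.simps)
    then show ?thesis using p(2) by (blast intro: deriv.Gen)
  qed (fact snd_A1 snd_A2 snd_A3 snd_A4 snd_A5 snd_A6 snd_A7 snd_A8 snd_A9 snd_A10 snd_A11 snd_A12 snd_A13 snd_A14)+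
qed

lemma der_base: assumes "Rl_der L b H S (\<lambda>w. False) v" shows "ind (Rl_der L b H) S v"
  apply (rule ind_rule[OF mono_der, where ws = "[]"])
  using assms by simp_all

lemma der_complete:
  assumes "deriv L b \<Gamma> \<phi>" "\<forall>\<psi>\<in>\<Gamma>. H S (enc_fm \<psi>)"
  shows "ind (Rl_der L b H) S (enc_fm \<phi>)"
  using assms
proof (induct rule: deriv.induct)
  case (hyp \<phi>)
  have d: "DH L b H S (enc_fm \<phi>)" unfolding DH_def using hyp wff_complete by auto
  show ?case by (rule der_base) (use d in \<open>simp add: Rl_der_def\<close>)
next
  case (A1 \<phi> \<psi>)
  have d: "DA1 L b S (enc_fm (FMinus (FMinus \<phi> \<psi>) \<phi>))" unfolding DA1_def
    by (intro exI[of _ "enc_fm \<phi>"] exI[of _ "enc_fm \<psi>"] conjI wff_complete) (simp_all add: A1)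
  show ?case by (rule der_base) (use d in \<open>simp add: Rl_der_def\<close>)
next
  case (A2 \<phi> \<psi> \<chi>)
  have d: "DA2 L b S (enc_fm (FMinus (FMinus (FMinus \<chi> \<phi>) (FMinus \<chi> \<psi>)) (FMinus \<psi> \<phi>)))" unfolding DA2_def
    by (intro exI[of _ "enc_fm \<phi>"] exI[of _ "enc_fm \<psi>"] exI[of _ "enc_fm \<chi>"] conjI wff_complete) (simp_all add: A2)
  show ?case by (rule der_base) (use d in \<open>simp add: Rl_der_def\<close>)
next
  case (A3 \<phi> \<psi>)
  have d: "DA3 L b S (enc_fm (FMinus (FMinus \<phi> (FMinus \<phi> \<psi>)) (FMinus \<psi> (FMinus \<psi> \<phi>))))" unfolding DA3_def
    by (intro exI[of _ "enc_fm \<phi>"] exI[of _ "enc_fm \<psi>"] conjI wff_complete) (simp_all add: A3)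
  show ?case by (rule der_base) (use d in \<open>simp add: Rl_der_def\<close>)
next
  case (A4 \<phi> \<psi>)
  have d: "DA4 L b S (enc_fm (FMinus (FMinus (FNeg \<phi>) (FNeg \<psi>)) (FMinus \<psi> \<phi>)))" unfolding DA4_def
    by (intro exI[of _ "enc_fm \<phi>"] exI[of _ "enc_fm \<psi>"] conjI wff_complete) (simp_all add: A4)
  show ?case by (rule der_base) (use d in \<open>simp add: Rl_der_def\<close>)
next
  case (A5 \<phi>)
  have d: "DA5 L b S (enc_fm (FMinus (FHalf \<phi>) (FMinus \<phi> (FHalf \<phi>))))" unfolding DA5_def
    by (intro exI[of _ "enc_fm \<phi>"] conjI wff_complete) (simp_all add: A5)
  show ?case by (rule der_base) (use d in \<open>simp add: Rl_der_def\<close>)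
next
  case (A6 \<phi>)
  have d: "DA6 L b S (enc_fm (FMinus (FMinus \<phi> (FHalf \<phi>)) (FHalf \<phi>)))" unfolding DA6_def
    by (intro exI[of _ "enc_fm \<phi>"] conjI wff_complete) (simp_all add: A6)
  show ?case by (rule der_base) (use d in \<open>simp add: Rl_der_def\<close>)
next
  case (A7 \<phi> \<psi> x)
  have d: "DA7 L b S (enc_fm (FMinus (FMinus (FSup x \<psi>) (FSup x \<phi>)) (FSup x (FMinus \<psi> \<phi>))))" unfolding DA7_def
    by (intro exI[of _ "enc_fm \<phi>"] exI[of _ "enc_fm \<psi>"] exI[of _ x] conjI wff_complete) (simp_all add: A7)
  show ?case by (rule der_base) (use d in \<open>simp add: Rl_der_def\<close>)
next
  case (A8 \<phi> t x)
  have d: "DA8 L b S (enc_fm (FMinus (subst_fm x t \<phi>) (FSup x \<phi>)))" unfolding DA8_def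
    by (intro exI[of _ "enc_fm \<phi>"] exI[of _ "enc_trm t"] exI[of _ x] exI[of _ "enc_fm (subst_fm x t \<phi>)"]
        conjI wff_complete wft_complete ff_complete sbf_complete) (simp_all add: A8)
  show ?case by (rule der_base) (use d in \<open>simp add: Rl_der_def\<close>)
next
  case (A9 \<phi> x)
  have d: "DA9 L b S (enc_fm (FMinus (FSup x \<phi>) \<phi>))" unfolding DA9_def
    by (intro exI[of _ "enc_fm \<phi>"] exI[of _ x] conjI wff_complete) (simp_all add: A9 fvf_iff)
  show ?case by (rule der_base) (use d in \<open>simp add: Rl_der_def\<close>)
next
  case (A10 x)
  have d: "DA10 (enc_fm (FDist (TVar x) (TVar x)))" unfolding DA10_def by simp
  show ?case by (rule der_base) (use d in \<open>simp add: Rl_der_def\<close>)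
next
  case (A11 x y)
  have d: "DA11 (enc_fm (FMinus (FDist (TVar x) (TVar y)) (FDist (TVar y) (TVar x))))" unfolding DA11_def by simp
  show ?case by (rule der_base) (use d in \<open>simp add: Rl_der_def\<close>)
next
  case (A12 x z y)
  have d: "DA12 (enc_fm (FMinus (FMinus (FDist (TVar x) (TVar z)) (FDist (TVar x) (TVar y))) (FDist (TVar y) (TVar z))))"
    unfolding DA12_def by simp
  show ?case by (rule der_base) (use d in \<open>simp add: Rl_der_def\<close>)
next
  case (A13 f xs i kr mr ke me z w)
  have d: "DA13 L S (enc_fm (FMin (FMinus (FDist (TFn f (map TVar (xs[i := z]))) (TFn f (map TVar (xs[i := w])))) (dyad me ke))
                          (FMinus (dyad mr kr) (FDist (TVar z) (TVar w)))))"
    unfolding DA13_def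
    apply (rule exI[of _ f], rule exI[of _ "vcode (xs[i := z])"], rule exI[of _ "vcode (xs[i := w])"],
        rule exI[of _ i], rule exI[of _ z], rule exI[of _ w], rule exI[of _ "length xs"],
        rule exI[of _ kr], rule exI[of _ mr], rule exI[of _ ke], rule exI[of _ me],
        rule exI[of _ "enc_fm (dyad me ke)"], rule exI[of _ "enc_fm (dyad mr kr)"])
    apply (intro conjI)
    using A13 vu_complete[of i xs S z w] by (simp_all add: FAs_iff FMs_iff dy_complete FMin_def canon_dyadic_def)
  show ?case by (rule der_base) (use d in \<open>simp add: Rl_der_def\<close>)
next
  case (A14 f xs i kr mr ke me z w)
  have d: "DA14 L S (enc_fm (FMin (FMinus (FMinus (FPred f (map TVar (xs[i := z]))) (FPred f (map TVar (xs[i := w])))) (dyad me ke))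
                          (FMinus (dyad mr kr) (FDist (TVar z) (TVar w)))))"
    unfolding DA14_def
    apply (rule exI[of _ f], rule exI[of _ "vcode (xs[i := z])"], rule exI[of _ "vcode (xs[i := w])"],
        rule exI[of _ i], rule exI[of _ z], rule exI[of _ w], rule exI[of _ "length xs"],
        rule exI[of _ kr], rule exI[of _ mr], rule exI[of _ ke], rule exI[of _ me],
        rule exI[of _ "enc_fm (dyad me ke)"], rule exI[of _ "enc_fm (dyad mr kr)"])
    apply (intro conjI)
    using A14 vu_complete[of i xs S z w] by (simp_all add: PAs_iff PMs_iff dy_complete FMin_def canon_dyadic_def)
  show ?case by (rule der_base) (use d in \<open>simp add: Rl_der_def\<close>)
next
  case (MP \<phi> \<psi>)
  have i1: "ind (Rl_der L b H) S (enc_fm \<phi>)" and i2: "ind (Rl_der L b H) S (enc_fm (FMinus \<psi> \<phi>))" using MP by auto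
  have d: "DMP (\<lambda>w. w \<in> set [enc_fm \<phi>, enc_fm (FMinus \<psi> \<phi>)]) (enc_fm \<psi>)"
    unfolding DMP_def by (rule exI[of _ "enc_fm \<phi>"]) simp
  show ?case
    apply (rule ind_rule[OF mono_der, where ws = "[enc_fm \<phi>, enc_fm (FMinus \<psi> \<phi>)]"])
    using d apply (simp add: Rl_der_def)
    using i1 i2 by simp
next
  case (Gen \<phi> x)
  have i1: "ind (Rl_der L b H) S (enc_fm \<phi>)" using Gen by auto
  have d: "DGen (\<lambda>w. w \<in> set [enc_fm \<phi>]) (enc_fm (FSup x \<phi>))"
    unfolding DGen_def by (rule exI[of _ x], rule exI[of _ "enc_fm \<phi>"]) simp
  show ?case
    apply (rule ind_rule[OF mono_der, where ws = "[enc_fm \<phi>]"])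
    using d apply (simp add: Rl_der_def)
    using i1 by simp
qed

lemma der_iff: "ind (Rl_der L b H) S n \<longleftrightarrow> (\<exists>\<phi>. n = enc_fm \<phi> \<and> deriv L b {\<psi>. H S (enc_fm \<psi>)} \<phi>)"
proof
  assume "ind (Rl_der L b H) S n" then show "\<exists>\<phi>. n = enc_fm \<phi> \<and> deriv L b {\<psi>. H S (enc_fm \<psi>)} \<phi>"
    by (rule der_sound0)
next
  assume "\<exists>\<phi>. n = enc_fm \<phi> \<and> deriv L b {\<psi>. H S (enc_fm \<psi>)} \<phi>"
  then obtain \<phi> where h: "n = enc_fm \<phi>" "deriv L b {\<psi>. H S (enc_fm \<psi>)} \<phi>" by blast
  have "ind (Rl_der L b H) S (enc_fm \<phi>)" by (rule der_complete[OF h(2)]) blast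
  then show "ind (Rl_der L b H) S n" unfolding h(1) .
qed


lemma dval_less: "dval kp mp < dval kq mq \<longleftrightarrow> kp * 2 ^ mq < kq * 2 ^ mp"
proof -
  have "dval kp mp < dval kq mq \<longleftrightarrow> real kp * 2 ^ mq < real kq * 2 ^ mp"
    unfolding dval_def by (simp add: divide_less_eq less_divide_eq mult.commute mult.left_commute)
  also have "real kp * 2 ^ mq = real (kp * 2 ^ mq)" by simp
  also have "real kq * 2 ^ mp = real (kq * 2 ^ mp)" by simp
  finally show ?thesis by (simp only: of_nat_less_iff)
qed

definition Sent :: "lang \<Rightarrow> bool \<Rightarrow> nat set \<Rightarrow> nat \<Rightarrow> bool" where
  "Sent L b S n \<longleftrightarrow> WF L b S n \<and> (\<forall>y. \<not> FvF S n y)"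

lemma Sent_iff: "Sent L b S n \<longleftrightarrow> (\<exists>\<phi>. n = enc_fm \<phi> \<and> sentence L b \<phi>)"
proof
  assume h: "Sent L b S n"
  then obtain \<phi> where p: "n = enc_fm \<phi>" "wf_fm L b \<phi>" unfolding Sent_def wff_iff by blast
  have "\<forall>y. \<not> FvF S (enc_fm \<phi>) y" using h p(1) unfolding Sent_def by simp
  then have "fv_fm \<phi> = {}" unfolding fvf_iff by blast
  then show "\<exists>\<phi>. n = enc_fm \<phi> \<and> sentence L b \<phi>" using p unfolding sentence_def by blast
next
  assume "\<exists>\<phi>. n = enc_fm \<phi> \<and> sentence L b \<phi>"
  then obtain \<phi> where p: "n = enc_fm \<phi>" "wf_fm L b \<phi>" "fv_fm \<phi> = {}" unfolding sentence_def by blast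
  have "WF L b S (enc_fm \<phi>)" using p(2) wff_complete by blast
  moreover have "\<forall>y. \<not> FvF S (enc_fm \<phi>) y" unfolding fvf_iff using p(3) by blast
  ultimately show "Sent L b S n" unfolding Sent_def p(1) by blast
qed

lemma Sent_code: "Sent L b S (enc_fm \<phi>) \<longleftrightarrow> sentence L b \<phi>"
  unfolding Sent_iff enc_fm_inj by blast

lemma dfn_Sent0: "computable_lang L \<Longrightarrow> dfn (\<lambda>S e. Sent L b S (e 0))"
  unfolding Sent_def by (intro dfn_intros)

lemma dfn_Sent[dfn_intros]: "computable_lang L \<Longrightarrow> dfnT a \<Longrightarrow> dfn (\<lambda>S e. Sent L b S (a e))"
  by (rule dfn_app1[where R = "\<lambda>S x. Sent L b S x", OF dfn_Sent0])

definition Char :: "lang \<Rightarrow> fm set \<Rightarrow> nat set \<Rightarrow> bool" where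
  "Char L T S \<longleftrightarrow>
    (\<forall>n. n \<in> S \<longrightarrow> Sent L True S n) \<and>
    (\<exists>n. WF L True S n \<and> \<not> ind (Rl_der L True (\<lambda>S n. n \<in> S)) S n) \<and>
    (\<forall>\<sigma>. Sent L True S \<sigma> \<longrightarrow> (\<forall>k. \<exists>d. ind Rl_dy S (pe k (pe 1 d)) \<and> cM \<sigma> d \<in> S) \<longrightarrow> \<sigma> \<in> S) \<and>
    (\<forall>\<sigma> \<tau>. Sent L True S \<sigma> \<longrightarrow> Sent L True S \<tau> \<longrightarrow> cM \<sigma> \<tau> \<in> S \<or> cM \<tau> \<sigma> \<in> S) \<and>
    (\<forall>p x kp mp kq mq. WF L True S p \<longrightarrow> (\<forall>y. FvF S p y \<longrightarrow> y = x) \<longrightarrow>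
        canon_dyadic kp mp \<longrightarrow> canon_dyadic kq mq \<longrightarrow> kp * 2 ^ mq < kq * 2 ^ mp \<longrightarrow>
        (\<exists>c s dq dp. ind Rl_dy S (pe mq (pe kq dq)) \<and> ind Rl_dy S (pe mp (pe kp dp)) \<and>
            SbF S x (pe 2 c) p s \<and> cM (cM (cS x p) dq) (cM (cM (cS x p) dq) (cM dp s)) \<in> S)) \<and>
    (\<forall>n. Sent L False S n \<longrightarrow> ind Rl_un S n \<longrightarrow> ind (Rl_der L False (\<lambda>S n. n \<in> enc_fm ` T)) S n \<longrightarrow> n \<in> S)"

lemma dfn_Char:
  assumes "computable_lang L" "arithmetical_set (enc_fm ` T)"
  shows "dfn (\<lambda>S e. Char L T S)"
proof -
  have h1: "\<And>a. dfnT a \<Longrightarrow> dfn (\<lambda>S e. (\<lambda>S n. n \<in> S) S (a e))" by (simp add: dfn_inT)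
  have h2: "\<And>a. dfnT a \<Longrightarrow> dfn (\<lambda>S e. (\<lambda>S n. n \<in> enc_fm ` T) S (a e))" by (simp add: dfn_arith[OF assms(2)])
  show ?thesis unfolding Char_def canon_dyadic_def
    by (intro dfn_intros dfn_der[OF assms(1) h1] dfn_der[OF assms(1) h2] assms(1))
qed

lemma inj_enc_fm: "inj enc_fm" unfolding inj_def using enc_fm_inj by blast

lemma derS_iff: "ind (Rl_der L True (\<lambda>S n. n \<in> S)) S (enc_fm \<phi>) \<longleftrightarrow> deriv L True {\<psi>. enc_fm \<psi> \<in> S} \<phi>"
  unfolding der_iff enc_fm_inj by blast

lemma derT_iff: "ind (Rl_der L False (\<lambda>S n. n \<in> enc_fm ` T)) S (enc_fm \<phi>) \<longleftrightarrow> deriv L False T \<phi>"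
proof -
  have e: "{\<psi>. enc_fm \<psi> \<in> enc_fm ` T} = T" using inj_image_mem_iff[OF inj_enc_fm] by blast
  show ?thesis unfolding der_iff enc_fm_inj e by blast
qed

lemma code_FMin_henkin:
  "enc_fm (FMin (FMinus (FSup x \<phi>) (dyad mq kq)) (FMinus (dyad mp kp) (subst_fm x (TCst c) \<phi>))) =
   cM (cM (cS x (enc_fm \<phi>)) (enc_fm (dyad mq kq)))
      (cM (cM (cS x (enc_fm \<phi>)) (enc_fm (dyad mq kq))) (cM (enc_fm (dyad mp kp)) (enc_fm (subst_fm x (TCst c) \<phi>))))"
  by (simp only: FMin_def enc_fm.simps)

lemma Char_to_Good:
  assumes C: "Char L T S"
  shows "\<exists>T'. is_theory L True T' \<and> max_consistent L T' \<and> henkin L T' \<and>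
                    {\<sigma>. sentence L False \<sigma> \<and> universal \<sigma> \<and> deriv L False T \<sigma>} \<subseteq> T' \<and>
                    S = enc_fm ` T'"
proof -
  note C1 = C[unfolded Char_def, THEN conjunct1]
  note C2 = C[unfolded Char_def, THEN conjunct2, THEN conjunct1]
  note C3 = C[unfolded Char_def, THEN conjunct2, THEN conjunct2, THEN conjunct1]
  note C4 = C[unfolded Char_def, THEN conjunct2, THEN conjunct2, THEN conjunct2, THEN conjunct1]
  note C5 = C[unfolded Char_def, THEN conjunct2, THEN conjunct2, THEN conjunct2, THEN conjunct2, THEN conjunct1]
  note C6 = C[unfolded Char_def, THEN conjunct2, THEN conjunct2, THEN conjunct2, THEN conjunct2, THEN conjunct2]
  define T' where "T' = {\<phi>. enc_fm \<phi> \<in> S}"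
  have memT: "\<phi> \<in> T' \<longleftrightarrow> enc_fm \<phi> \<in> S" for \<phi> unfolding T'_def by simp
  have SE: "S = enc_fm ` T'"
  proof
    show "S \<subseteq> enc_fm ` T'"
    proof
      fix n assume n: "n \<in> S"
      then obtain \<phi> where "n = enc_fm \<phi>" using C1 Sent_iff by blast
      then show "n \<in> enc_fm ` T'" using n memT by blast
    qed
  qed (use memT in blast)
  have th: "is_theory L True T'" unfolding is_theory_def
  proof
    fix \<phi> assume "\<phi> \<in> T'"
    then have "Sent L True S (enc_fm \<phi>)" using C1 memT by blast
    then show "sentence L True \<phi>" by (simp only: Sent_code)
  qed
  have cons: "consistent L True T'"
  proof -
    obtain n where n: "WF L True S n" "\<not> ind (Rl_der L True (\<lambda>S n. n \<in> S)) S n" using C2 by blast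
    obtain \<phi> where p: "n = enc_fm \<phi>" "wf_fm L True \<phi>" using n(1) by (rule WF_E)
    have "\<not> deriv L True T' \<phi>" using n(2) unfolding p(1) derS_iff T'_def .
    then show ?thesis unfolding consistent_def using p(2) by blast
  qed
  have ma: "\<sigma> \<in> T'" if s: "sentence L True \<sigma>" and h: "\<forall>n. FMinus \<sigma> (dyad n 1) \<in> T'" for \<sigma>
  proof -
    have "\<exists>d. ind Rl_dy S (pe k (pe 1 d)) \<and> cM (enc_fm \<sigma>) d \<in> S" for k
    proof (intro exI conjI)
      show "ind Rl_dy S (pe k (pe 1 (enc_fm (dyad k 1))))" by (rule dy_complete)
      have "enc_fm (FMinus \<sigma> (dyad k 1)) \<in> S" using h memT by blast
      then show "cM (enc_fm \<sigma>) (enc_fm (dyad k 1)) \<in> S" by (simp only: enc_fm.simps)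
    qed
    moreover have "Sent L True S (enc_fm \<sigma>)" using s by (simp only: Sent_code)
    ultimately have "enc_fm \<sigma> \<in> S" using C3 by blast
    then show ?thesis using memT by blast
  qed
  have mb: "FMinus \<sigma> \<tau> \<in> T' \<or> FMinus \<tau> \<sigma> \<in> T'" if "sentence L True \<sigma>" "sentence L True \<tau>" for \<sigma> \<tau>
  proof -
    have "Sent L True S (enc_fm \<sigma>)" "Sent L True S (enc_fm \<tau>)" using that by (simp_all only: Sent_code)
    then have "cM (enc_fm \<sigma>) (enc_fm \<tau>) \<in> S \<or> cM (enc_fm \<tau>) (enc_fm \<sigma>) \<in> S" using C4 by blast
    then show ?thesis unfolding memT by (simp only: enc_fm.simps)
  qed
  have mc: "max_consistent L T'" unfolding max_consistent_def using cons ma mb by blast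
  have hk: "henkin L T'" unfolding henkin_def
  proof (intro allI impI)
    fix \<phi> x kp mp kq mq
    assume a: "wf_fm L True \<phi>" "fv_fm \<phi> \<subseteq> {x}" "canon_dyadic kp mp" "canon_dyadic kq mq" "dval kp mp < dval kq mq"
    have w: "WF L True S (enc_fm \<phi>)" using a(1) wff_complete by blast
    have fv: "\<forall>y. FvF S (enc_fm \<phi>) y \<longrightarrow> y = x" using a(2) unfolding fvf_iff by blast
    have lt: "kp * 2 ^ mq < kq * 2 ^ mp" using a(5) dval_less by blast
    obtain c s dq dp where o: "ind Rl_dy S (pe mq (pe kq dq))" "ind Rl_dy S (pe mp (pe kp dp))"
        "SbF S x (pe 2 c) (enc_fm \<phi>) s"
        "cM (cM (cS x (enc_fm \<phi>)) dq) (cM (cM (cS x (enc_fm \<phi>)) dq) (cM dp s)) \<in> S"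
      using C5 w fv a(3,4) lt by blast
    have dq: "dq = enc_fm (dyad mq kq)" using o(1) dy_iff by blast
    have dp: "dp = enc_fm (dyad mp kp)" using o(2) dy_iff by blast
    have "SbF S x (enc_trm (TCst c)) (enc_fm \<phi>) s" using o(3) by (simp only: enc_trm.simps)
    then have sv: "s = enc_fm (subst_fm x (TCst c) \<phi>)" by (simp only: sbf_iff)
    have "enc_fm (FMin (FMinus (FSup x \<phi>) (dyad mq kq)) (FMinus (dyad mp kp) (subst_fm x (TCst c) \<phi>))) \<in> S"
      using o(4) unfolding code_FMin_henkin dq dp sv .
    then show "\<exists>c. FMin (FMinus (FSup x \<phi>) (dyad mq kq)) (FMinus (dyad mp kp) (subst_fm x (TCst c) \<phi>)) \<in> T'"
      using memT by blast
  qed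
  have un: "{\<sigma>. sentence L False \<sigma> \<and> universal \<sigma> \<and> deriv L False T \<sigma>} \<subseteq> T'"
  proof
    fix \<sigma> assume "\<sigma> \<in> {\<sigma>. sentence L False \<sigma> \<and> universal \<sigma> \<and> deriv L False T \<sigma>}"
    then have h: "sentence L False \<sigma>" "universal \<sigma>" "deriv L False T \<sigma>" by auto
    have "Sent L False S (enc_fm \<sigma>)" using h(1) by (simp only: Sent_code)
    moreover have "ind Rl_un S (enc_fm \<sigma>)" using h(2) by (simp only: un_iff)
    moreover have "ind (Rl_der L False (\<lambda>S n. n \<in> enc_fm ` T)) S (enc_fm \<sigma>)" using h(3) by (simp only: derT_iff)
    ultimately have "enc_fm \<sigma> \<in> S" using C6 by blast
    then show "\<sigma> \<in> T'" using memT by blast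
  qed
  show ?thesis using th mc hk un SE by blast
qed

lemma Good_to_Char:
  assumes th: "is_theory L True T'" and mc: "max_consistent L T'" and hk: "henkin L T'"
    and un: "{\<sigma>. sentence L False \<sigma> \<and> universal \<sigma> \<and> deriv L False T \<sigma>} \<subseteq> T'"
    and SE: "S = enc_fm ` T'"
  shows "Char L T S"
proof -
  have memT: "enc_fm \<phi> \<in> S \<longleftrightarrow> \<phi> \<in> T'" for \<phi> unfolding SE using inj_image_mem_iff[OF inj_enc_fm] .
  have TT: "{\<psi>. enc_fm \<psi> \<in> S} = T'" using memT by blast
  have c1: "\<forall>n. n \<in> S \<longrightarrow> Sent L True S n"
  proof (intro allI impI)
    fix n assume "n \<in> S"
    then obtain \<phi> where "n = enc_fm \<phi>" "\<phi> \<in> T'" unfolding SE by blast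
    then show "Sent L True S n" using th unfolding is_theory_def by (simp add: Sent_code)
  qed
  have c2: "\<exists>n. WF L True S n \<and> \<not> ind (Rl_der L True (\<lambda>S n. n \<in> S)) S n"
  proof -
    obtain \<phi> where p: "wf_fm L True \<phi>" "\<not> deriv L True T' \<phi>"
      using mc unfolding max_consistent_def consistent_def by blast
    have "WF L True S (enc_fm \<phi>)" using p(1) wff_complete by blast
    moreover have "\<not> ind (Rl_der L True (\<lambda>S n. n \<in> S)) S (enc_fm \<phi>)" unfolding derS_iff TT using p(2) .
    ultimately show ?thesis by blast
  qed
  have c3: "\<forall>\<sigma>. Sent L True S \<sigma> \<longrightarrow> (\<forall>k. \<exists>d. ind Rl_dy S (pe k (pe 1 d)) \<and> cM \<sigma> d \<in> S) \<longrightarrow> \<sigma> \<in> S"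
  proof (intro allI impI)
    fix \<sigma> assume s: "Sent L True S \<sigma>" and h: "\<forall>k. \<exists>d. ind Rl_dy S (pe k (pe 1 d)) \<and> cM \<sigma> d \<in> S"
    obtain \<phi> where p: "\<sigma> = enc_fm \<phi>" "sentence L True \<phi>" using s Sent_iff by blast
    have "FMinus \<phi> (dyad k 1) \<in> T'" for k
    proof -
      obtain d where d: "ind Rl_dy S (pe k (pe 1 d))" "cM \<sigma> d \<in> S" using h by blast
      have "d = enc_fm (dyad k 1)" using d(1) dy_iff by blast
      then have "enc_fm (FMinus \<phi> (dyad k 1)) \<in> S" using d(2) p(1) by (simp only: enc_fm.simps)
      then show ?thesis using memT by blast
    qed
    then have "\<phi> \<in> T'" using mc p(2) unfolding max_consistent_def by blast
    then show "\<sigma> \<in> S" using p(1) memT by blast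
  qed
  have c4: "\<forall>\<sigma> \<tau>. Sent L True S \<sigma> \<longrightarrow> Sent L True S \<tau> \<longrightarrow> cM \<sigma> \<tau> \<in> S \<or> cM \<tau> \<sigma> \<in> S"
  proof (intro allI impI)
    fix \<sigma> \<tau> assume "Sent L True S \<sigma>" "Sent L True S \<tau>"
    then obtain \<phi> \<psi> where p: "\<sigma> = enc_fm \<phi>" "sentence L True \<phi>" "\<tau> = enc_fm \<psi>" "sentence L True \<psi>"
      using Sent_iff by blast
    then have "FMinus \<phi> \<psi> \<in> T' \<or> FMinus \<psi> \<phi> \<in> T'" using mc unfolding max_consistent_def by blast
    then have "enc_fm (FMinus \<phi> \<psi>) \<in> S \<or> enc_fm (FMinus \<psi> \<phi>) \<in> S" using memT by blast
    then show "cM \<sigma> \<tau> \<in> S \<or> cM \<tau> \<sigma> \<in> S" using p(1,3) by (simp only: enc_fm.simps)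
  qed
  have c5: "\<forall>p x kp mp kq mq. WF L True S p \<longrightarrow> (\<forall>y. FvF S p y \<longrightarrow> y = x) \<longrightarrow>
        canon_dyadic kp mp \<longrightarrow> canon_dyadic kq mq \<longrightarrow> kp * 2 ^ mq < kq * 2 ^ mp \<longrightarrow>
        (\<exists>c s dq dp. ind Rl_dy S (pe mq (pe kq dq)) \<and> ind Rl_dy S (pe mp (pe kp dp)) \<and>
            SbF S x (pe 2 c) p s \<and> cM (cM (cS x p) dq) (cM (cM (cS x p) dq) (cM dp s)) \<in> S)"
  proof (intro allI impI)
    fix p x kp mp kq mq
    assume a: "WF L True S p" "\<forall>y. FvF S p y \<longrightarrow> y = x" "canon_dyadic kp mp" "canon_dyadic kq mq" "kp * 2 ^ mq < kq * 2 ^ mp"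
    obtain \<phi> where ph: "p = enc_fm \<phi>" "wf_fm L True \<phi>" using a(1) by (rule WF_E)
    have fv: "fv_fm \<phi> \<subseteq> {x}" using a(2) unfolding ph(1) fvf_iff by blast
    have lt: "dval kp mp < dval kq mq" using a(5) dval_less by blast
    obtain c where c: "FMin (FMinus (FSup x \<phi>) (dyad mq kq)) (FMinus (dyad mp kp) (subst_fm x (TCst c) \<phi>)) \<in> T'"
      using hk ph(2) fv a(3,4) lt unfolding henkin_def by blast
    have "enc_fm (FMin (FMinus (FSup x \<phi>) (dyad mq kq)) (FMinus (dyad mp kp) (subst_fm x (TCst c) \<phi>))) \<in> S"
      using c memT by blast
    then have m: "cM (cM (cS x p) (enc_fm (dyad mq kq))) (cM (cM (cS x p) (enc_fm (dyad mq kq))) (cM (enc_fm (dyad mp kp)) (enc_fm (subst_fm x (TCst c) \<phi>)))) \<in> S"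
      unfolding code_FMin_henkin ph(1) .
    have sb: "SbF S x (pe 2 c) p (enc_fm (subst_fm x (TCst c) \<phi>))"
      using sbf_complete[of S x "TCst c" \<phi>] unfolding ph(1) by (simp only: enc_trm.simps)
    show "\<exists>c s dq dp. ind Rl_dy S (pe mq (pe kq dq)) \<and> ind Rl_dy S (pe mp (pe kp dp)) \<and>
            SbF S x (pe 2 c) p s \<and> cM (cM (cS x p) dq) (cM (cM (cS x p) dq) (cM dp s)) \<in> S"
      using dy_complete[of S mq kq] dy_complete[of S mp kp] sb m by blast
  qed
  have c6: "\<forall>n. Sent L False S n \<longrightarrow> ind Rl_un S n \<longrightarrow> ind (Rl_der L False (\<lambda>S n. n \<in> enc_fm ` T)) S n \<longrightarrow> n \<in> S"
  proof (intro allI impI)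
    fix n assume a: "Sent L False S n" "ind Rl_un S n" "ind (Rl_der L False (\<lambda>S n. n \<in> enc_fm ` T)) S n"
    obtain \<phi> where p: "n = enc_fm \<phi>" "sentence L False \<phi>" using a(1) Sent_iff by blast
    have "universal \<phi>" using a(2) unfolding p(1) un_iff .
    moreover have "deriv L False T \<phi>" using a(3) unfolding p(1) derT_iff .
    ultimately have "\<phi> \<in> T'" using un p(2) by blast
    then show "n \<in> S" using p(1) memT by blast
  qed
  show ?thesis unfolding Char_def using c1 c2 c3 c4 c5 c6 by blast
qed

lemma Char_iff:
  "Char L T S \<longleftrightarrow> (\<exists>T'. is_theory L True T' \<and> max_consistent L T' \<and> henkin L T' \<and>
                    {\<sigma>. sentence L False \<sigma> \<and> universal \<sigma> \<and> deriv L False T \<sigma>} \<subseteq> T' \<and>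
                    S = enc_fm ` T')"
proof
  assume "Char L T S" then show "\<exists>T'. is_theory L True T' \<and> max_consistent L T' \<and> henkin L T' \<and>
                    {\<sigma>. sentence L False \<sigma> \<and> universal \<sigma> \<and> deriv L False T \<sigma>} \<subseteq> T' \<and>
                    S = enc_fm ` T'" by (rule Char_to_Good)
next
  assume "\<exists>T'. is_theory L True T' \<and> max_consistent L T' \<and> henkin L T' \<and>
                    {\<sigma>. sentence L False \<sigma> \<and> universal \<sigma> \<and> deriv L False T \<sigma>} \<subseteq> T' \<and>
                    S = enc_fm ` T'"
  then obtain T' where "is_theory L True T'" "max_consistent L T'" "henkin L T'"
    "{\<sigma>. sentence L False \<sigma> \<and> universal \<sigma> \<and> deriv L False T \<sigma>} \<subseteq> T'" "S = enc_fm ` T'" by blast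
  then show "Char L T S" by (rule Good_to_Char)
qed

theorem mainTheorem16:
  fixes L :: lang and T :: "fm set"
  assumes "is_lang L" and "computable_lang L"
    and "is_theory L False T"
    and "arithmetical_set (enc_fm ` T)"
  shows "\<exists>\<Phi>0. afv \<Phi>0 = {} \<and>
           (\<forall>S. aholds S (\<lambda>_. 0) \<Phi>0 \<longleftrightarrow>
              (\<exists>T'. is_theory L True T' \<and> max_consistent L T' \<and> henkin L T' \<and>
                    {\<sigma>. sentence L False \<sigma> \<and> universal \<sigma> \<and> deriv L False T \<sigma>} \<subseteq> T' \<and>
                    S = enc_fm ` T'))"
proof -
  obtain \<Phi> where h: "afv \<Phi> = {}" "\<forall>S. aholds S (\<lambda>_. 0) \<Phi> = Char L T S"
    using dfn_closed[OF dfn_Char[OF assms(2) assms(4)]] by blast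
  have "\<forall>S. aholds S (\<lambda>_. 0) \<Phi> \<longleftrightarrow>
              (\<exists>T'. is_theory L True T' \<and> max_consistent L T' \<and> henkin L T' \<and>
                    {\<sigma>. sentence L False \<sigma> \<and> universal \<sigma> \<and> deriv L False T \<sigma>} \<subseteq> T' \<and>
                    S = enc_fm ` T')"
    using h(2) unfolding Char_iff .
  then show ?thesis using h(1) by (intro exI[of _ \<Phi>] conjI)
qed


end
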